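(* Let $E:\mathcal{H}\to\mathbb{R}$ be of class $C^2$, and let $P_*\in\mathcal{M}_N$ be a nondegenerate local minimizer of $E$ on $\mathcal{M}_N$, in the sense that there exists $\eta>0$ such that $E(P)\ge E(P_* )+\eta\|P-P_*\|_{\rm F}^2$ for all $P\in\mathcal{M}_N$ in a neighborhood of $P_*$. Let $R:\mathcal{H}\to\mathcal{H}$ be of class $C^2$ such that for all $P\in\mathcal{M}_N$ and all $X\in\mathcal{H}$ small enough, $R(P+X)\in\mathcal{M}_N$ and $R(P+X)=P+\Pi_P(X)+O(X^2)$. Then for $\beta>0$ small enough and $P^0\in\mathcal{M}_N$ close enough to $P_*$, the iterates \[ P^{k+1}:=R\big(P^k-\beta\,\Pi_{P^k}(\nabla E(P^k))\big) \] converge linearly to $P_*$ with asymptotic rate $r(1-\beta J_{\rm grad})<1$, where $J_{\rm grad}:=\Omega_*+K_*$; that is, for every $\theta>0$ there is $C_\theta>0$ such that $\|P^k-P_*\|_{\rm F}\le C_\theta\,(r(1-\beta J_{\rm grad})+\theta)^k\,\|P^0-P_*\|_{\rm F}$ for all $k$, for all such $P^0$.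
   Context: $\mathcal{H}$ is the space of real symmetric $N_b\times N_b$ matrices with the Frobenius inner product $\langle A,B\rangle_{\rm F}=\mathrm{Tr}(AB)$. For $1\le N\le N_b$, $\mathcal{M}_N:=\{P\in\mathcal{H}\mid P^2=P,\ \mathrm{Tr}(P)=N\}$. For $P\in\mathcal{M}_N$, $\Pi_P(X)=PX(1-P)+(1-P)XP$ is the orthogonal projection of $\mathcal{H}$ onto the tangent space $T_P\mathcal{M}_N=\{X\in\mathcal{H}\mid PXP=(1-P)X(1-P)=0\}$. Set $H_*:=\nabla E(P_* )$ and $K_*:=\Pi_{P_*}\nabla^2E(P_* )\Pi_{P_*}$, and define $\Omega_*:T_{P_*}\mathcal{M}_N\to T_{P_*}\mathcal{M}_N$ by $\Omega_*X:=P_*X(1-P_* )H_*-H_*P_*X(1-P_* )+\big(P_*X(1-P_* )H_*-H_*P_*X(1-P_* )\big)^{*}$ (equivalently $\Omega_*X=-[P_*,[H_*,X]]$). $J_{\rm grad}=\Omega_*+K_*$ is regarded as an operator on $T_{P_*}\mathcal{M}_N$, and $r(\cdot)$ denotes the spectral radius of an operator on $T_{P_*}\mathcal{M}_N$. *)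

theory Defs
  imports "HOL-Analysis.Analysis"
begin

text \<open>Matrices are elements of real^'n^'n (N_b = CARD('n)). The Euclidean inner product
 on real^'n^'n is the sum of entrywise products, i.e. the Frobenius inner product
 Tr(A^T B); on symmetric matrices this is Tr(AB). The norm is the Frobenius norm.\<close>

definition Hsym :: "(real^'n^'n) set" where
  "Hsym = {A. transpose A = A}"

definition symm :: "real^'n^'n \<Rightarrow> real^'n^'n" where
  "symm A = (1/2) *\<^sub>R (A + transpose A)"

definition MN :: "nat \<Rightarrow> (real^'n^'n) set" where
  "MN N = {P. P \<in> Hsym \<and> P ** P = P \<and> trace P = real N}"

definition PiP :: "real^'n^'n \<Rightarrow> real^'n^'n \<Rightarrow> real^'n^'n" where
  "PiP P X = P ** X ** (mat 1 - P) + (mat 1 - P) ** X ** P"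

definition tangent :: "real^'n^'n \<Rightarrow> (real^'n^'n) set" where
  "tangent P = {X. X \<in> Hsym \<and> P ** X ** P = 0 \<and> (mat 1 - P) ** X ** (mat 1 - P) = 0}"

definition C2 :: "('a::real_normed_vector \<Rightarrow> 'b::real_normed_vector) \<Rightarrow> bool" where
  "C2 f \<longleftrightarrow> (\<exists>f' f''.
      (\<forall>x. (f has_derivative blinfun_apply (f' x)) (at x)) \<and>
      (\<forall>x. (f' has_derivative blinfun_apply (f'' x)) (at x)) \<and>
      continuous_on UNIV f'')"

text \<open>Gradient of E on all matrices (Riesz representative of the Frechet derivative),
 and the gradient on H (its orthogonal projection onto symmetric matrices).\<close>
definition full_grad :: "(real^'n^'n \<Rightarrow> real) \<Rightarrow> real^'n^'n \<Rightarrow> real^'n^'n" where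
  "full_grad E P = (\<Sum>b\<in>Basis. frechet_derivative E (at P) b *\<^sub>R b)"

definition gradH :: "(real^'n^'n \<Rightarrow> real) \<Rightarrow> real^'n^'n \<Rightarrow> real^'n^'n" where
  "gradH E P = symm (full_grad E P)"

definition hessH :: "(real^'n^'n \<Rightarrow> real) \<Rightarrow> real^'n^'n \<Rightarrow> real^'n^'n \<Rightarrow> real^'n^'n" where
  "hessH E P = frechet_derivative (gradH E) (at P)"

definition Omega :: "real^'n^'n \<Rightarrow> real^'n^'n \<Rightarrow> real^'n^'n \<Rightarrow> real^'n^'n" where
  "Omega Ps Hs X =
     (let Y = Ps ** X ** (mat 1 - Ps) ** Hs - Hs ** Ps ** X ** (mat 1 - Ps)
      in Y + transpose Y)"

definition Kop :: "(real^'n^'n \<Rightarrow> real) \<Rightarrow> real^'n^'n \<Rightarrow> real^'n^'n \<Rightarrow> real^'n^'n" where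
  "Kop E Ps X = PiP Ps (hessH E Ps (PiP Ps X))"

definition Jgrad :: "(real^'n^'n \<Rightarrow> real) \<Rightarrow> real^'n^'n \<Rightarrow> real^'n^'n \<Rightarrow> real^'n^'n" where
  "Jgrad E Ps X = Omega Ps (gradH E Ps) X + Kop E Ps X"

text \<open>Complex spectrum of a real linear operator L on a real subspace T:
 eigenvalues of the complexification, i.e. lambda = a + ib with L(u+iv) = lambda (u+iv),
 u, v in T not both zero.\<close>
definition cspec :: "'a::real_vector set \<Rightarrow> ('a \<Rightarrow> 'a) \<Rightarrow> complex set" where
  "cspec T L = {z. \<exists>u v. u \<in> T \<and> v \<in> T \<and> (u \<noteq> 0 \<or> v \<noteq> 0) \<and>
       L u = Re z *\<^sub>R u - Im z *\<^sub>R v \<and> L v = Im z *\<^sub>R u + Re z *\<^sub>R v}"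

definition spec_radius :: "'a::real_vector set \<Rightarrow> ('a \<Rightarrow> 'a) \<Rightarrow> real" where
  "spec_radius T L = (if cspec T L = {} then 0 else Sup (cmod ` cspec T L))"

end

theory Submission
  imports Defs "HOL-Analysis.Analysis"
begin


lemma transpose_add: "transpose (A + B) = transpose A + transpose (B::real^'n^'m)"
  by (simp add: transpose_def vec_eq_iff)
lemma transpose_diff: "transpose (A - B) = transpose A - transpose (B::real^'n^'m)"
  by (simp add: transpose_def vec_eq_iff)
lemma transpose_uminus: "transpose (- A) = - transpose (A::real^'n^'m)"
  by (simp add: transpose_def vec_eq_iff)
lemma transpose_zero[simp]: "transpose (0::real^'n^'m) = 0"
  by (simp add: transpose_def vec_eq_iff)

lemma mm_rdistrib: "(A + B) ** C = A ** C + B ** (C::real^'n^'n)"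
  by (simp add: matrix_matrix_mult_def vec_eq_iff sum.distrib distrib_right)
lemma mm_ldiff: "A ** (B - C) = A ** B - A ** (C::real^'n^'n)"
  by (simp add: matrix_matrix_mult_def vec_eq_iff sum_subtractf right_diff_distrib)
lemma mm_rdiff: "(A - B) ** C = A ** C - B ** (C::real^'n^'n)"
  by (simp add: matrix_matrix_mult_def vec_eq_iff sum_subtractf left_diff_distrib)
lemma mm_lminus: "(- A) ** C = - (A ** (C::real^'n^'n))"
  by (simp add: matrix_matrix_mult_def vec_eq_iff sum_negf)
lemma mm_rminus: "A ** (- C) = - (A ** (C::real^'n^'n))"
  by (simp add: matrix_matrix_mult_def vec_eq_iff sum_negf)
lemma mm_lscale: "(c *\<^sub>R A) ** C = c *\<^sub>R (A ** (C::real^'n^'n))"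
  by (simp add: matrix_matrix_mult_def vec_eq_iff sum_distrib_left mult.assoc)
lemma mm_rscale: "A ** (c *\<^sub>R C) = c *\<^sub>R (A ** (C::real^'n^'n))"
  by (simp add: matrix_matrix_mult_def vec_eq_iff sum_distrib_left mult_ac)

lemmas mm_simps = matrix_add_ldistrib mm_rdistrib mm_ldiff mm_rdiff mm_lminus mm_rminus
  mm_lscale mm_rscale matrix_mul_assoc

lemma inner_mat: "inner (A::real^'n^'m) B = (\<Sum>i\<in>UNIV. \<Sum>j\<in>UNIV. A$i$j * B$i$j)"
  by (simp add: inner_vec_def)

lemma inner_mm_left: "inner (A ** B) (C::real^'n^'n) = inner (B::real^'n^'n) (transpose A ** C)"
proof -
  have "inner (A ** B) C = (\<Sum>i\<in>UNIV. \<Sum>j\<in>UNIV. \<Sum>k\<in>UNIV. A$i$k * B$k$j * C$i$j)"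
    by (simp add: inner_mat matrix_matrix_mult_def sum_distrib_right)
  also have "\<dots> = (\<Sum>i\<in>UNIV. \<Sum>k\<in>UNIV. \<Sum>j\<in>UNIV. A$i$k * B$k$j * C$i$j)"
    by (rule sum.cong[OF refl], rule sum.swap)
  also have "\<dots> = (\<Sum>k\<in>UNIV. \<Sum>i\<in>UNIV. \<Sum>j\<in>UNIV. A$i$k * B$k$j * C$i$j)"
    by (rule sum.swap)
  also have "\<dots> = (\<Sum>k\<in>UNIV. \<Sum>j\<in>UNIV. \<Sum>i\<in>UNIV. A$i$k * B$k$j * C$i$j)"
    by (rule sum.cong[OF refl], rule sum.swap)
  also have "\<dots> = inner B (transpose A ** C)"
    unfolding inner_mat matrix_matrix_mult_def transpose_def
    by (simp add: sum_distrib_left algebra_simps)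
  finally show ?thesis .
qed

lemma inner_transpose: "inner (transpose A) (transpose B) = inner (A::real^'n^'n) B"
proof -
  have "inner (transpose A) (transpose B) = (\<Sum>i\<in>UNIV. \<Sum>j\<in>UNIV. A$j$i * B$j$i)"
    unfolding inner_mat transpose_def by simp
  also have "\<dots> = inner A B" unfolding inner_mat by (rule sum.swap)
  finally show ?thesis .
qed

lemma inner_mm_right: "inner (A ** B) (C::real^'n^'n) = inner (A::real^'n^'n) (C ** transpose B)"
proof -
  have "inner (A ** B) C = inner (transpose (A ** B)) (transpose C)"
    by (rule inner_transpose[symmetric])
  also have "\<dots> = inner (transpose B ** transpose A) (transpose C)"
    by (simp only: matrix_transpose_mul)
  also have "\<dots> = inner (transpose A) (B ** transpose C)"
    by (simp only: inner_mm_left transpose_transpose)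
  also have "\<dots> = inner (transpose A) (transpose (C ** transpose B))"
    by (simp only: matrix_transpose_mul transpose_transpose)
  also have "\<dots> = inner A (C ** transpose B)"
    using inner_transpose[of A "C ** transpose B"] by simp
  finally show ?thesis .
qed

lemma bilinear_mm: "bilinear (\<lambda>A B::real^'n^'n. A ** B)"
  unfolding bilinear_def linear_iff
  by (simp add: mm_simps)

lemma bounded_bilinear_mm: "bounded_bilinear (\<lambda>A B::real^'n^'n. A ** B)"
  using bilinear_mm bilinear_conv_bounded_bilinear by blast

lemma norm_mm_le: "\<exists>K>0. \<forall>A B::real^'n^'n. norm (A ** B) \<le> norm A * norm B * K"
  using bounded_bilinear.pos_bounded[OF bounded_bilinear_mm] by blast

lemma linear_transpose: "bounded_linear (transpose :: real^'n^'n \<Rightarrow> _)"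
  by (rule bounded_linearI' ) (auto simp: transpose_add transpose_scalar)

lemma norm_transpose: "norm (transpose (A::real^'n^'n)) = norm A"
  unfolding norm_eq_sqrt_inner by (simp only: inner_transpose)


lemma vec_numeral_nth2: "(numeral k * (A::real^'n^'m))$i$j = numeral k * A$i$j"
  by simp
lemma mm_num_l[simp]: "(numeral k * A) ** B = numeral k * (A ** (B::real^'n^'n))"
  by (simp add: matrix_matrix_mult_def vec_eq_iff sum_distrib_left mult.assoc)
lemma mm_num_r[simp]: "A ** (numeral k * B) = numeral k * (A ** (B::real^'n^'n))"
  by (simp add: matrix_matrix_mult_def vec_eq_iff sum_distrib_left mult.left_commute)
lemma transpose_num[simp]: "transpose (numeral k * A) = numeral k * transpose (A::real^'n^'n)"
  by (simp add: transpose_def vec_eq_iff)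

lemma mm_idem_assoc: "P ** P = P \<Longrightarrow> Z ** P ** P = Z ** (P::real^'n^'n)"
  by (metis matrix_mul_assoc)

lemma proj_basic:
  fixes P :: "real^'n^'n"
  assumes "P ** P = P"
  shows "(mat 1 - P) ** (mat 1 - P) = mat 1 - P" "P ** (mat 1 - P) = 0" "(mat 1 - P) ** P = 0"
  using assms by (simp_all add: mm_simps)

lemma PiP_alt: "PiP P X = P ** X - P ** X ** P + X ** P - P ** X ** P"
  unfolding PiP_def by (simp add: mm_simps algebra_simps)

lemma PiP_idem:
  fixes P :: "real^'n^'n"
  assumes "P ** P = P"
  shows "PiP P (PiP P X) = PiP P X"
  using assms by (simp add: PiP_alt mm_simps algebra_simps mm_idem_assoc[OF assms])

lemma PiP_sym:
  fixes P :: "real^'n^'n"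
  assumes "transpose P = P" "transpose X = X"
  shows "transpose (PiP P X) = PiP P X"
  using assms by (simp add: PiP_alt transpose_add transpose_diff matrix_transpose_mul mm_simps algebra_simps)

lemma PiP_tangent:
  fixes P :: "real^'n^'n"
  assumes "transpose P = P" "P ** P = P" "transpose X = X"
  shows "PiP P X \<in> tangent P"
  unfolding tangent_def Hsym_def
  using PiP_sym[OF assms(1,3)] assms(2)
  by (simp add: PiP_alt mm_simps algebra_simps mm_idem_assoc[OF assms(2)])

lemma tangent_PiP:
  fixes P :: "real^'n^'n"
  assumes "X \<in> tangent P"
  shows "PiP P X = X"
proof -
  have a: "P ** X ** P = 0" "(mat 1 - P) ** X ** (mat 1 - P) = 0"
    using assms unfolding tangent_def by auto
  from a(2) have "X - P ** X - X ** P + P ** X ** P = 0"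
    by (simp add: mm_simps algebra_simps)
  then show ?thesis using a(1) unfolding PiP_alt by (simp add: algebra_simps)
qed

lemma PiP_linear: "bounded_linear (PiP (P::real^'n^'n))"
  by (rule bounded_linearI') (simp_all add: PiP_def mm_simps algebra_simps)

lemma inner_sandwich:
  fixes X A Y B :: "real^'n^'n"
  shows "inner (X ** A ** Y) B = inner A (transpose X ** B ** transpose Y)"
  using inner_mm_right[of "X ** A" Y B] inner_mm_left[of X A "B ** transpose Y"]
  by (simp add: matrix_mul_assoc)

lemma PiP_selfadj:
  fixes P :: "real^'n^'n"
  assumes "transpose P = P"
  shows "inner (PiP P A) B = inner A (PiP P B)"
  unfolding PiP_def
  by (simp add: inner_add_left inner_add_right inner_sandwich assms transpose_diff)

lemma MN_dev:
  fixes P P' :: "real^'n^'n"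
  assumes "P ** P = P" "P' ** P' = P'"
  shows "(P' - P) - PiP P (P' - P) =
     (mat 1 - P) ** ((P' - P) ** (P' - P)) ** (mat 1 - P) - P ** ((P' - P) ** (P' - P)) ** P"
proof -
  define D where "D = P' - P"
  have P': "P' = P + D" unfolding D_def by simp
  have e: "P ** D + D ** P + D ** D = D"
    using assms(2) unfolding P' by (simp add: mm_simps assms(1) algebra_simps)
  have e1: "P ** D ** P = - (P ** (D ** D) ** P)"
  proof -
    have "P ** (P ** D + D ** P + D ** D) ** P = P ** D ** P" using e by simp
    then show ?thesis using assms(1)
      by (simp add: mm_simps algebra_simps mm_idem_assoc[OF assms(1)] eq_neg_iff_add_eq_0)
  qed
  have e2: "(mat 1 - P) ** D ** (mat 1 - P) = (mat 1 - P) ** (D ** D) ** (mat 1 - P)"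
  proof -
    have "(mat 1 - P) ** (P ** D + D ** P + D ** D) ** (mat 1 - P) = (mat 1 - P) ** D ** (mat 1 - P)"
      using e by simp
    then show ?thesis using assms(1)
      by (simp add: mm_simps algebra_simps mm_idem_assoc[OF assms(1)] eq_neg_iff_add_eq_0)
  qed
  have "D - PiP P D = P ** D ** P + (mat 1 - P) ** D ** (mat 1 - P)"
    by (simp add: PiP_alt mm_simps algebra_simps)
  then show ?thesis unfolding D_def[symmetric] using e1 e2 by simp
qed


lemma line_deriv:
  fixes g :: "'a::real_normed_vector \<Rightarrow> real"
  assumes "\<And>x. (g has_derivative g' x) (at x)"
  shows "((\<lambda>s. g (x0 + s *\<^sub>R A)) has_real_derivative g' (x0 + s *\<^sub>R A) A) (at s)"
proof -
  have l: "bounded_linear (g' (x0 + s *\<^sub>R A))" using assms has_derivative_bounded_linear by blast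
  have d1: "((\<lambda>s. x0 + s *\<^sub>R A) has_derivative (\<lambda>h. h *\<^sub>R A)) (at s)"
    by (auto intro!: derivative_eq_intros)
  have "((\<lambda>s. g (x0 + s *\<^sub>R A)) has_derivative (\<lambda>h. g' (x0 + s *\<^sub>R A) (h *\<^sub>R A))) (at s)"
    using diff_chain_at[OF d1 assms[of "x0 + s *\<^sub>R A"]] by (simp add: o_def)
  then show ?thesis
    by (rule has_derivative_imp_has_field_derivative)
       (simp add: linear_simps(5)[OF l] mult.commute)
qed

lemma blinfun_apply_deriv:
  assumes "((f'::'a::real_normed_vector \<Rightarrow> 'a \<Rightarrow>\<^sub>L real) has_derivative blinfun_apply (f'' x)) (at x)"
  shows "((\<lambda>x. blinfun_apply (f' x) b) has_derivative (\<lambda>h. blinfun_apply (blinfun_apply (f'' x) h) b)) (at x)"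
  using bounded_linear.has_derivative[OF blinfun.bounded_linear_left assms] by simp

lemma full_grad_eq:
  assumes "(E has_derivative blinfun_apply (f' x)) (at x)"
  shows "full_grad E x = (\<Sum>b\<in>Basis. blinfun_apply (f' x) b *\<^sub>R b)"
  unfolding full_grad_def using frechet_derivative_at[OF assms] by simp

lemma inner_full_grad:
  fixes E :: "real^'n^'n \<Rightarrow> real"
  assumes "(E has_derivative blinfun_apply (f' x)) (at x)"
  shows "inner (full_grad E x) Y = blinfun_apply (f' x) Y"
proof -
  have "inner (full_grad E x) Y = (\<Sum>b\<in>Basis. blinfun_apply (f' x) b * inner b Y)"
    by (simp add: full_grad_eq[of E f' x, OF assms] inner_sum_left)
  also have "\<dots> = blinfun_apply (f' x) (\<Sum>b\<in>Basis. inner Y b *\<^sub>R b)"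
    by (simp add: blinfun.sum_right blinfun.scaleR_right inner_commute mult.commute)
  also have "\<dots> = blinfun_apply (f' x) Y" by (simp add: euclidean_representation)
  finally show ?thesis .
qed

lemma symm_sym: "transpose (symm A) = symm (A::real^'n^'n)"
  by (simp add: symm_def transpose_scalar transpose_add add.commute)

lemma inner_symm:
  fixes A Y :: "real^'n^'n"
  assumes "transpose Y = Y"
  shows "inner (symm A) Y = inner A Y"
proof -
  have "inner (transpose A) Y = inner A Y"
    using inner_transpose[of A Y] assms by simp
  then show ?thesis by (simp add: symm_def inner_add_left)
qed

lemma bounded_linear_symm: "bounded_linear (symm :: real^'n^'n \<Rightarrow> _)"
  by (rule bounded_linearI') (auto simp: symm_def transpose_add transpose_scalar algebra_simps)

lemma gradH_sym: "transpose (gradH E x) = gradH E x"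
  unfolding gradH_def by (rule symm_sym)

lemma inner_gradH:
  fixes E :: "real^'n^'n \<Rightarrow> real"
  assumes "(E has_derivative blinfun_apply (f' x)) (at x)" "transpose Y = Y"
  shows "inner (gradH E x) Y = blinfun_apply (f' x) Y"
  unfolding gradH_def using inner_symm[OF assms(2)] inner_full_grad[of E f' x, OF assms(1)] by simp

lemma gradH_deriv:
  fixes E :: "real^'n^'n \<Rightarrow> real"
  assumes d1: "\<And>x. (E has_derivative blinfun_apply (f' x)) (at x)"
    and d2: "(f' has_derivative blinfun_apply (f'' x)) (at x)"
  shows "(gradH E has_derivative (\<lambda>A. symm (\<Sum>b\<in>Basis. blinfun_apply (blinfun_apply (f'' x) A) b *\<^sub>R b))) (at x)"
proof -
  have fg: "full_grad E = (\<lambda>x. \<Sum>b\<in>Basis. blinfun_apply (f' x) b *\<^sub>R b)"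
    using full_grad_eq[of E f', OF d1] by auto
  have "(full_grad E has_derivative (\<lambda>A. \<Sum>b\<in>Basis. blinfun_apply (blinfun_apply (f'' x) A) b *\<^sub>R b)) (at x)"
    unfolding fg
    by (intro has_derivative_sum has_derivative_scaleR_left blinfun_apply_deriv[of f' f'' x, OF d2])
  then have "((\<lambda>x. symm (full_grad E x)) has_derivative (\<lambda>A. symm (\<Sum>b\<in>Basis. blinfun_apply (blinfun_apply (f'' x) A) b *\<^sub>R b))) (at x)"
    by (rule bounded_linear.has_derivative[OF bounded_linear_symm])
  then show ?thesis unfolding gradH_def[abs_def] .
qed

lemma hessH_eq:
  fixes E :: "real^'n^'n \<Rightarrow> real"
  assumes d1: "\<And>x. (E has_derivative blinfun_apply (f' x)) (at x)"
    and d2: "(f' has_derivative blinfun_apply (f'' x)) (at x)"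
  shows "hessH E x = (\<lambda>A. symm (\<Sum>b\<in>Basis. blinfun_apply (blinfun_apply (f'' x) A) b *\<^sub>R b))"
  unfolding hessH_def using frechet_derivative_at[OF gradH_deriv[of E f' f'' x, OF d1 d2]] by simp

lemma inner_hessH:
  fixes E :: "real^'n^'n \<Rightarrow> real"
  assumes d1: "\<And>x. (E has_derivative blinfun_apply (f' x)) (at x)"
    and d2: "(f' has_derivative blinfun_apply (f'' x)) (at x)"
    and "transpose Y = Y"
  shows "inner (hessH E x A) Y = blinfun_apply (blinfun_apply (f'' x) A) Y"
proof -
  have "inner (hessH E x A) Y = inner (\<Sum>b\<in>Basis. blinfun_apply (blinfun_apply (f'' x) A) b *\<^sub>R b) Y"
    unfolding hessH_eq[of E f' f'' x, OF d1 d2] using inner_symm[OF assms(3)] by simp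
  also have "\<dots> = blinfun_apply (blinfun_apply (f'' x) A) (\<Sum>b\<in>Basis. inner Y b *\<^sub>R b)"
    by (simp add: inner_sum_left blinfun.sum_right blinfun.scaleR_right, rule sum.cong, auto simp: inner_commute)
  also have "\<dots> = blinfun_apply (blinfun_apply (f'' x) A) Y" by (simp add: euclidean_representation)

  finally show ?thesis .
qed


lemma mixed_mvt:
  fixes E :: "'a::real_normed_vector \<Rightarrow> real"
  assumes d1: "\<And>x. (E has_derivative blinfun_apply (f' x)) (at x)"
    and d2: "\<And>x. (f' has_derivative blinfun_apply (f'' x)) (at x)"
    and t: "t > 0"
  shows "\<exists>\<xi>. norm (\<xi> - P) \<le> t * (norm A + norm B) \<and>
    E (P + t *\<^sub>R A + t *\<^sub>R B) - E (P + t *\<^sub>R A) - E (P + t *\<^sub>R B) + E P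
      = t\<^sup>2 * blinfun_apply (blinfun_apply (f'' \<xi>) B) A"
proof -
  define h where "h s = E ((P + t *\<^sub>R B) + s *\<^sub>R A) - E (P + s *\<^sub>R A)" for s
  have hd: "(h has_real_derivative (blinfun_apply (f' ((P + t *\<^sub>R B) + s *\<^sub>R A)) A
      - blinfun_apply (f' (P + s *\<^sub>R A)) A)) (at s)" for s
    unfolding h_def[abs_def]
    by (intro DERIV_diff line_deriv[where g' = "\<lambda>x. blinfun_apply (f' x)"] d1)
  obtain s1 where s1: "0 < s1" "s1 < t" and hm: "h t - h 0 = (t - 0) * (blinfun_apply (f' ((P + t *\<^sub>R B) + s1 *\<^sub>R A)) A
      - blinfun_apply (f' (P + s1 *\<^sub>R A)) A)"
    using MVT2[OF t hd] by blast
  define k where "k \<tau> = blinfun_apply (f' ((P + s1 *\<^sub>R A) + \<tau> *\<^sub>R B)) A" for \<tau>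
  have kd: "(k has_real_derivative blinfun_apply (blinfun_apply (f'' ((P + s1 *\<^sub>R A) + \<tau> *\<^sub>R B)) B) A) (at \<tau>)" for \<tau>
    unfolding k_def[abs_def]
    by (rule line_deriv[where g = "\<lambda>x. blinfun_apply (f' x) A" and
          g' = "\<lambda>x h. blinfun_apply (blinfun_apply (f'' x) h) A"])
       (rule blinfun_apply_deriv[of f' f'', OF d2])
  obtain \<tau>1 where t1: "0 < \<tau>1" "\<tau>1 < t" and km: "k t - k 0 = (t - 0) *
      blinfun_apply (blinfun_apply (f'' ((P + s1 *\<^sub>R A) + \<tau>1 *\<^sub>R B)) B) A"
    using MVT2[OF t kd] by blast
  define \<xi> where "\<xi> = (P + s1 *\<^sub>R A) + \<tau>1 *\<^sub>R B"
  have "norm (\<xi> - P) \<le> norm (s1 *\<^sub>R A) + norm (\<tau>1 *\<^sub>R B)"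
    unfolding \<xi>_def using norm_triangle_ineq[of "s1 *\<^sub>R A" "\<tau>1 *\<^sub>R B"] by (simp add: algebra_simps)
  also have "\<dots> = s1 * norm A + \<tau>1 * norm B" using s1 t1 by simp
  also have "\<dots> \<le> t * norm A + t * norm B"
    using s1 t1 by (intro add_mono mult_right_mono) auto
  finally have n: "norm (\<xi> - P) \<le> t * (norm A + norm B)" by (simp add: algebra_simps)
  have "h t - h 0 = E (P + t *\<^sub>R A + t *\<^sub>R B) - E (P + t *\<^sub>R A) - E (P + t *\<^sub>R B) + E P"
    unfolding h_def by (simp add: algebra_simps)
  moreover have "k t - k 0 = blinfun_apply (f' ((P + t *\<^sub>R B) + s1 *\<^sub>R A)) A
      - blinfun_apply (f' (P + s1 *\<^sub>R A)) A"
    unfolding k_def by (simp add: algebra_simps)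
  ultimately have "E (P + t *\<^sub>R A + t *\<^sub>R B) - E (P + t *\<^sub>R A) - E (P + t *\<^sub>R B) + E P
      = t * (t * blinfun_apply (blinfun_apply (f'' \<xi>) B) A)"
    using hm km unfolding \<xi>_def by simp
  then show ?thesis using n by (auto simp: power2_eq_square)
qed

lemma half_absurd: "(x::real) \<le> x / 2 \<Longrightarrow> 0 < x \<Longrightarrow> False" by linarith

lemma schwarz:
  fixes E :: "'a::real_normed_vector \<Rightarrow> real"
  assumes d1: "\<And>x. (E has_derivative blinfun_apply (f' x)) (at x)"
    and d2: "\<And>x. (f' has_derivative blinfun_apply (f'' x)) (at x)"
    and c: "continuous_on UNIV f''"
  shows "blinfun_apply (blinfun_apply (f'' P) A) B = blinfun_apply (blinfun_apply (f'' P) B) A"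
proof -
  let ?d = "\<lambda>\<xi> X Y. blinfun_apply (blinfun_apply (f'' \<xi>) X) Y"
  have key: "\<bar>?d P A B - ?d P B A\<bar> \<le> e" if e: "e > 0" for e
  proof -
    define K where "K = norm A * norm B + 1"
    have K: "K > 0" unfolding K_def by (simp add: add_nonneg_pos)
    have "isCont f'' P" using c by (simp add: continuous_on_eq_continuous_at)
    then obtain d where d: "d > 0" and dd: "\<And>x. dist x P < d \<Longrightarrow> dist (f'' x) (f'' P) < e / (2 * K)"
      using e K unfolding continuous_at_eps_delta by (metis divide_pos_pos mult_pos_pos zero_less_numeral)
    define t where "t = d / (2 * (norm A + norm B + 1))"
    have t: "t > 0" using d unfolding t_def by (simp add: add_nonneg_pos)
    have tlt: "t * (norm A + norm B) < d"
    proof -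
      have "t * (norm A + norm B) < t * (2 * (norm A + norm B + 1))"
        using t by (intro mult_strict_left_mono) (auto simp: add_nonneg_pos)
      also have "\<dots> = d"
      proof -
        have "norm A + norm B + 1 > 0" by (intro add_nonneg_pos) auto
        then show ?thesis unfolding t_def by simp
      qed
      finally show ?thesis .
    qed
    obtain \<xi>1 where x1: "norm (\<xi>1 - P) \<le> t * (norm A + norm B)"
      and e1: "E (P + t *\<^sub>R A + t *\<^sub>R B) - E (P + t *\<^sub>R A) - E (P + t *\<^sub>R B) + E P = t\<^sup>2 * ?d \<xi>1 B A"
      using mixed_mvt[OF d1 d2 t, of P A B] by blast
    obtain \<xi>2 where x2: "norm (\<xi>2 - P) \<le> t * (norm B + norm A)"
      and e2: "E (P + t *\<^sub>R B + t *\<^sub>R A) - E (P + t *\<^sub>R B) - E (P + t *\<^sub>R A) + E P = t\<^sup>2 * ?d \<xi>2 A B"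
      using mixed_mvt[OF d1 d2 t, of P B A] by blast
    have "t\<^sup>2 * ?d \<xi>1 B A = t\<^sup>2 * ?d \<xi>2 A B"
      using e1 e2 by (simp add: algebra_simps)
    then have eq: "?d \<xi>1 B A = ?d \<xi>2 A B" using t by simp
    have bnd: "\<bar>?d \<xi> X Y - ?d P X Y\<bar> \<le> e / 2" if "norm (\<xi> - P) < d" "norm X * norm Y \<le> norm A * norm B" for \<xi> X Y
    proof -
      have "?d \<xi> X Y - ?d P X Y = blinfun_apply (blinfun_apply (f'' \<xi> - f'' P) X) Y"
        by (simp add: blinfun.diff_left)
      also have "\<bar>\<dots>\<bar> \<le> norm (blinfun_apply (f'' \<xi> - f'' P) X) * norm Y"
        using norm_blinfun[of "blinfun_apply (f'' \<xi> - f'' P) X" Y] by simp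
      also have "\<dots> \<le> (norm (f'' \<xi> - f'' P) * norm X) * norm Y"
        by (intro mult_right_mono norm_blinfun) auto
      also have "\<dots> = norm (f'' \<xi> - f'' P) * (norm X * norm Y)" by (simp add: mult.assoc)
      also have "\<dots> \<le> (e / (2 * K)) * (norm X * norm Y)"
      proof (rule mult_right_mono)
        show "norm (f'' \<xi> - f'' P) \<le> e / (2 * K)"
          using dd[of \<xi>] that(1) by (simp add: dist_norm)
      qed simp
      also have "\<dots> \<le> (e / (2 * K)) * K"
        using that(2) e K unfolding K_def by (intro mult_left_mono) auto
      also have "\<dots> = e / 2" using K by simp
      finally show ?thesis .
    qed
    have b1: "\<bar>?d \<xi>1 B A - ?d P B A\<bar> \<le> e / 2"
      using bnd[of \<xi>1 B A] x1 tlt by (simp add: mult.commute)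
    have b2: "\<bar>?d \<xi>2 A B - ?d P A B\<bar> \<le> e / 2"
      using bnd[of \<xi>2 A B] x2 tlt by (simp add: add.commute)
    show ?thesis using b1 b2 eq by linarith
  qed
  show ?thesis
  proof (rule ccontr)
    assume "?d P A B \<noteq> ?d P B A"
    then have "\<bar>?d P A B - ?d P B A\<bar> > 0" by simp
    from key[OF half_gt_zero[OF this]] this show False by (rule half_absurd)
  qed
qed

lemma taylor2:
  fixes E :: "'a::real_normed_vector \<Rightarrow> real"
  assumes d1: "\<And>x. (E has_derivative blinfun_apply (f' x)) (at x)"
    and d2: "\<And>x. (f' has_derivative blinfun_apply (f'' x)) (at x)"
  shows "\<exists>\<tau>. 0 \<le> \<tau> \<and> \<tau> \<le> 1 \<and> E (P + D) = E P + blinfun_apply (f' P) D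
      + 1/2 * blinfun_apply (blinfun_apply (f'' (P + \<tau> *\<^sub>R D)) D) D"
proof -
  define df where "df m s = (if m = 0 then E (P + s *\<^sub>R D) else if m = 1 then blinfun_apply (f' (P + s *\<^sub>R D)) D
      else blinfun_apply (blinfun_apply (f'' (P + s *\<^sub>R D)) D) D)" for m :: nat and s :: real
  have D1: "((\<lambda>s. E (P + s *\<^sub>R D)) has_real_derivative blinfun_apply (f' (P + s *\<^sub>R D)) D) (at s)" for s
    by (rule line_deriv[where g' = "\<lambda>x. blinfun_apply (f' x)"]) (rule d1)
  have D2: "((\<lambda>s. blinfun_apply (f' (P + s *\<^sub>R D)) D) has_real_derivative
       blinfun_apply (blinfun_apply (f'' (P + s *\<^sub>R D)) D) D) (at s)" for s
    by (rule line_deriv[where g = "\<lambda>x. blinfun_apply (f' x) D" and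
          g' = "\<lambda>x h. blinfun_apply (blinfun_apply (f'' x) h) D"])
       (rule blinfun_apply_deriv[of f' f'', OF d2])
  have "\<forall>(m::nat) t. m < 2 \<and> 0 \<le> t \<and> t \<le> 1 \<longrightarrow> DERIV (df m) t :> df (Suc m) t"
  proof (intro allI impI)
    fix m :: nat and t :: real assume "m < 2 \<and> 0 \<le> t \<and> t \<le> 1"
    then have "m = 0 \<or> m = 1" by auto
    then show "DERIV (df m) t :> df (Suc m) t"
    proof
      assume "m = 0" then show ?thesis using D1 unfolding df_def[abs_def] by simp
    next
      assume "m = 1" then show ?thesis using D2 unfolding df_def[abs_def] by simp
    qed
  qed
  from Taylor[where n=2 and diff=df and f="\<lambda>s. E (P + s *\<^sub>R D)" and a=0 and b=1 and c=0 and x=1, OF _ _ this]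
  obtain t where "0 < t" "t < 1"
    "E (P + 1 *\<^sub>R D) = (\<Sum>m<2. df m 0 / fact m * (1 - 0) ^ m) + df 2 t / fact 2 * (1 - 0) ^ 2"
    unfolding df_def[abs_def] by auto
  then show ?thesis
    by (intro exI[of _ t]) (simp add: df_def numeral_2_eq_2)
qed


lemma bl_add: "bounded_linear f \<Longrightarrow> f (x + y) = f x + f y" by (simp add: linear_add bounded_linear.linear)
lemma bl_diff: "bounded_linear f \<Longrightarrow> f (x - y) = f x - f y" by (simp add: linear_diff bounded_linear.linear)
lemma bl_scaleR: "bounded_linear f \<Longrightarrow> f (c *\<^sub>R x) = c *\<^sub>R f x" by (simp add: linear_scale bounded_linear.linear)
lemma bl_zero: "bounded_linear f \<Longrightarrow> f 0 = 0" by (simp add: linear_0 bounded_linear.linear)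
lemma bl_neg: "bounded_linear f \<Longrightarrow> f (- x) = - f x" by (simp add: linear_neg bounded_linear.linear)


lemma cspec_bdd:
  fixes L :: "'a::real_inner \<Rightarrow> 'a"
  assumes bl: "bounded_linear L"
  obtains K where "K > 0" "\<And>z. z \<in> cspec T L \<Longrightarrow> cmod z \<le> K"
proof -
  obtain K where K: "K > 0" "\<And>x. norm (L x) \<le> norm x * K"
    using bounded_linear.pos_bounded[OF bl] by blast
  have "cmod z \<le> K" if z: "z \<in> cspec T L" for z
  proof -
    obtain u v where uv: "u \<noteq> 0 \<or> v \<noteq> 0" "L u = Re z *\<^sub>R u - Im z *\<^sub>R v" "L v = Im z *\<^sub>R u + Re z *\<^sub>R v"
      using z unfolding cspec_def by blast
    define a b where "a = Re z" "b = Im z"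
    have pos: "(norm u)\<^sup>2 + (norm v)\<^sup>2 > 0" using uv(1) by (auto simp: add_pos_nonneg add_nonneg_pos)
    have eq: "(norm (L u))\<^sup>2 + (norm (L v))\<^sup>2 = (a\<^sup>2 + b\<^sup>2) * ((norm u)\<^sup>2 + (norm v)\<^sup>2)"
      unfolding uv(2,3) a_b_def[symmetric] power2_norm_eq_inner
      by (simp add: inner_diff_left inner_diff_right inner_add_left inner_add_right
          inner_commute power2_eq_square algebra_simps)
    have le: "(norm (L u))\<^sup>2 + (norm (L v))\<^sup>2 \<le> K\<^sup>2 * ((norm u)\<^sup>2 + (norm v)\<^sup>2)"
    proof -
      have "(norm (L u))\<^sup>2 \<le> (norm u * K)\<^sup>2" using K(2)[of u] by (intro power_mono) auto
      moreover have "(norm (L v))\<^sup>2 \<le> (norm v * K)\<^sup>2" using K(2)[of v] by (intro power_mono) auto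
      ultimately show ?thesis by (simp add: power_mult_distrib algebra_simps)
    qed
    have "(a\<^sup>2 + b\<^sup>2) * ((norm u)\<^sup>2 + (norm v)\<^sup>2) \<le> K\<^sup>2 * ((norm u)\<^sup>2 + (norm v)\<^sup>2)"
      using eq le by simp
    then have "a\<^sup>2 + b\<^sup>2 \<le> K\<^sup>2" using pos by (simp add: mult_le_cancel_right)
    then have "sqrt (a\<^sup>2 + b\<^sup>2) \<le> sqrt (K\<^sup>2)" by (rule real_sqrt_le_mono)
    then have "sqrt (a\<^sup>2 + b\<^sup>2) \<le> K" using K(1) by simp
    then show ?thesis unfolding a_b_def cmod_def .
  qed
  then show ?thesis using K(1) that by blast
qed

lemma cspec_real:
  fixes L :: "'a::real_inner \<Rightarrow> 'a"
  assumes sym: "\<forall>x\<in>T. \<forall>y\<in>T. inner (L x) y = inner x (L y)"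
    and z: "z \<in> cspec T L"
  shows "Im z = 0 \<and> (\<exists>w\<in>T. w \<noteq> 0 \<and> L w = Re z *\<^sub>R w)"
proof -
  obtain u v where uv: "u \<in> T" "v \<in> T" "u \<noteq> 0 \<or> v \<noteq> 0" "L u = Re z *\<^sub>R u - Im z *\<^sub>R v" "L v = Im z *\<^sub>R u + Re z *\<^sub>R v"
    using z unfolding cspec_def by blast
  have pos: "(norm u)\<^sup>2 + (norm v)\<^sup>2 > 0" using uv(3) by (auto simp: add_pos_nonneg add_nonneg_pos)
  have "inner (L u) v = inner u (L v)" using sym uv by blast
  then have "Im z * ((norm u)\<^sup>2 + (norm v)\<^sup>2) = 0"
    unfolding uv(4,5) power2_norm_eq_inner
    by (simp add: inner_diff_left inner_add_right inner_commute algebra_simps)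
  moreover have "(norm u)\<^sup>2 + (norm v)\<^sup>2 \<noteq> 0" using pos by linarith
  ultimately have b: "Im z = 0" by (metis mult_eq_0_iff)
  show ?thesis
  proof (cases "u = 0")
    case True
    then have "v \<noteq> 0" using uv(3) by simp
    then show ?thesis using b uv by auto
  next
    case False
    then show ?thesis using b uv by auto
  qed
qed

lemma spec_radius_nonneg:
  fixes L :: "'a::real_inner \<Rightarrow> 'a"
  assumes bl: "bounded_linear L"
  shows "spec_radius T L \<ge> 0"
proof (cases "cspec T L = {}")
  case True then show ?thesis by (simp add: spec_radius_def)
next
  case False
  then obtain z where z: "z \<in> cspec T L" by blast
  obtain K where K: "\<And>z. z \<in> cspec T L \<Longrightarrow> cmod z \<le> K" using cspec_bdd[OF bl] by blast
  have "bdd_above (cmod ` cspec T L)" using K by (auto simp: bdd_above_def)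
  then have "cmod z \<le> Sup (cmod ` cspec T L)" using z by (intro cSup_upper) auto
  then show ?thesis using False unfolding spec_radius_def by (simp add: order_trans[OF norm_ge_zero])
qed

lemma eig_le_spec_radius:
  fixes L :: "'a::real_inner \<Rightarrow> 'a"
  assumes bl: "bounded_linear L" and w: "w \<in> T" "w \<noteq> 0" "L w = a *\<^sub>R w"
  shows "\<bar>a\<bar> \<le> spec_radius T L"
proof -
  have z: "complex_of_real a \<in> cspec T L"
    unfolding cspec_def using w by (intro CollectI exI[of _ w] exI[of _ 0]) (auto simp: subspace_0)
  obtain K where K: "\<And>z. z \<in> cspec T L \<Longrightarrow> cmod z \<le> K" using cspec_bdd[OF bl] by blast
  have "bdd_above (cmod ` cspec T L)" using K by (auto simp: bdd_above_def)
  then have "cmod (complex_of_real a) \<le> Sup (cmod ` cspec T L)" using cSup_upper[OF imageI[OF z]] by blast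
  then show ?thesis using z unfolding spec_radius_def by auto
qed

lemma spec_radius_le:
  fixes L :: "'a::real_inner \<Rightarrow> 'a"
  assumes sym: "\<forall>x\<in>T. \<forall>y\<in>T. inner (L x) y = inner x (L y)"
    and c: "c \<ge> 0" and ev: "\<And>w a. w \<in> T \<Longrightarrow> w \<noteq> 0 \<Longrightarrow> L w = a *\<^sub>R w \<Longrightarrow> \<bar>a\<bar> \<le> c"
  shows "spec_radius T L \<le> c"
proof (cases "cspec T L = {}")
  case True then show ?thesis using c by (simp add: spec_radius_def)
next
  case False
  have "cmod z \<le> c" if "z \<in> cspec T L" for z
  proof -
    from cspec_real[OF sym that] obtain w where "Im z = 0" "w \<in> T" "w \<noteq> 0" "L w = Re z *\<^sub>R w" by blast
    then have "\<bar>Re z\<bar> \<le> c" using ev by blast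
    then show ?thesis using \<open>Im z = 0\<close> by (simp add: cmod_def)
  qed
  then show ?thesis unfolding spec_radius_def using False by (auto intro!: cSup_least)
qed

lemma quad_nonneg_zero:
  fixes c1 q :: real
  assumes "q \<ge> 0" "\<And>t. 2 * t * c1 + t\<^sup>2 * q \<ge> 0"
  shows "c1 = 0"
proof (rule ccontr)
  assume c: "c1 \<noteq> 0"
  define t where "t = - c1 / (q + 1)"
  have q1: "q + 1 > 0" using assms(1) by simp
  have c2: "c1\<^sup>2 > 0" using c by simp
  have e1: "2 * t * c1 = - 2 * c1\<^sup>2 / (q + 1)" unfolding t_def by (simp add: power2_eq_square)
  have e2: "t\<^sup>2 * q = (c1\<^sup>2 / (q + 1)) * (q / (q + 1))" unfolding t_def
    by (simp add: power2_eq_square power_divide)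
  have "q / (q + 1) \<le> 1" using q1 by simp
  then have "t\<^sup>2 * q \<le> c1\<^sup>2 / (q + 1)" unfolding e2 using c2 q1
    by (intro mult_left_le) auto
  then have "2 * t * c1 + t\<^sup>2 * q \<le> - (c1\<^sup>2 / (q + 1))" unfolding e1 by simp
  also have "\<dots> < 0" using c2 q1 by simp
  finally show False using assms(2)[of t] by simp
qed

lemma norm_le_spec_radius:
  fixes L :: "'a::euclidean_space \<Rightarrow> 'a"
  assumes bl: "bounded_linear L" and sub: "subspace T" and maps: "\<And>x. x \<in> T \<Longrightarrow> L x \<in> T"
    and sym: "\<forall>x\<in>T. \<forall>y\<in>T. inner (L x) y = inner x (L y)"
    and y: "y \<in> T"
  shows "norm (L y) \<le> spec_radius T L * norm y"
proof (cases "T \<subseteq> {0}")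
  case True
  then have "y = 0" using y by auto
  then show ?thesis using bl_zero[OF bl] by simp
next
  case False
  then obtain y1 where y1: "y1 \<in> T" "y1 \<noteq> 0" by auto
  define S where "S = sphere 0 1 \<inter> T"
  have cS: "compact S" unfolding S_def using closed_subspace[OF sub] by (intro compact_Int_closed) auto
  have "y1 /\<^sub>R norm y1 \<in> S" unfolding S_def using y1 sub by (auto simp: subspace_scale)
  then have neS: "S \<noteq> {}" by auto
  have "continuous_on S (\<lambda>y. norm (L y))"
    by (intro continuous_on_norm linear_continuous_on bl)
  from continuous_attains_sup[OF cS neS this]
  obtain y0 where y0: "y0 \<in> S" and mx: "\<And>y. y \<in> S \<Longrightarrow> norm (L y) \<le> norm (L y0)" by blast
  have y0T: "y0 \<in> T" and y0n: "norm y0 = 1" using y0 unfolding S_def by auto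
  define s where "s = norm (L y0)"
  have y01: "inner y0 y0 = 1" using y0n by (simp add: dot_square_norm)
  have s2: "inner (L y0) (L y0) = s * s" unfolding s_def by (simp add: dot_square_norm power2_eq_square)
  have s0: "s \<ge> 0" unfolding s_def by simp
  have bnd: "norm (L x) \<le> s * norm x" if "x \<in> T" for x
  proof (cases "x = 0")
    case True then show ?thesis using bl_zero[OF bl] by simp
  next
    case False
    have "x /\<^sub>R norm x \<in> S" unfolding S_def using that False sub by (auto simp: subspace_scale)
    then have "norm (L (x /\<^sub>R norm x)) \<le> s" using mx unfolding s_def by blast
    moreover have "norm (L x) = norm x * norm (L (x /\<^sub>R norm x))"
      using False by (simp add: bl_scaleR[OF bl])
    ultimately show ?thesis by (metis mult.commute mult_left_mono norm_ge_zero)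
  qed
  have LLsym: "inner (L (L x)) z = inner (L x) (L z)" if "x \<in> T" "z \<in> T" for x z
    using sym maps that by auto
  define A where "A x = s\<^sup>2 *\<^sub>R x - L (L x)" for x
  have AT: "A y0 \<in> T" unfolding A_def using y0T maps sub by (auto intro: subspace_diff subspace_scale)
  have orth: "inner (A y0) h = 0" if h: "h \<in> T" for h
  proof -
    define q where "q = s\<^sup>2 * (norm h)\<^sup>2 - (norm (L h))\<^sup>2"
    have q0: "q \<ge> 0" unfolding q_def using bnd[OF h] by (simp add: power_mono power_mult_distrib[symmetric] norm_ge_zero)
    have "2 * t * inner (A y0) h + t\<^sup>2 * q \<ge> 0" for t
    proof -
      have yt: "y0 + t *\<^sub>R h \<in> T" using y0T h sub by (auto intro: subspace_add subspace_scale)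
      have "(norm (L (y0 + t *\<^sub>R h)))\<^sup>2 \<le> (s * norm (y0 + t *\<^sub>R h))\<^sup>2"
        using bnd[OF yt] by (intro power_mono) auto
      moreover have "(norm (L (y0 + t *\<^sub>R h)))\<^sup>2 = s\<^sup>2 + 2 * t * inner (L (L y0)) h + t\<^sup>2 * (norm (L h))\<^sup>2"
        unfolding bl_add[OF bl] bl_scaleR[OF bl] power2_norm_eq_inner
          LLsym[OF y0T h] using s2 inner_commute[of "L h" "L y0"]
        by (simp add: inner_add_left inner_add_right power2_eq_square algebra_simps)
      moreover have "(s * norm (y0 + t *\<^sub>R h))\<^sup>2 = s\<^sup>2 * (1 + 2 * t * inner y0 h + t\<^sup>2 * (norm h)\<^sup>2)"
        unfolding power_mult_distrib power2_norm_eq_inner using y01 inner_commute[of h y0]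
        by (simp add: inner_add_left inner_add_right power2_eq_square algebra_simps power2_norm_eq_inner)
      ultimately show ?thesis unfolding A_def q_def
        by (simp add: inner_diff_left algebra_simps power2_eq_square)
    qed
    then show ?thesis using quad_nonneg_zero[OF q0] by blast
  qed
  have "inner (A y0) (A y0) = 0" using orth[OF AT] .
  then have LL: "L (L y0) = s\<^sup>2 *\<^sub>R y0" unfolding A_def by simp
  have "s \<le> spec_radius T L"
  proof (cases "s = 0")
    case True then show ?thesis using spec_radius_nonneg[OF bl] by simp
  next
    case sn: False
    show ?thesis
    proof (cases "L y0 + s *\<^sub>R y0 = 0")
      case True
      then have "L y0 = (- s) *\<^sub>R y0" by (simp add: eq_neg_iff_add_eq_0)
      moreover have "y0 \<noteq> 0" using y0n by auto
      ultimately show ?thesis using eig_le_spec_radius[OF bl y0T] by fastforce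
    next
      case False
      have zT: "L y0 + s *\<^sub>R y0 \<in> T" using y0T maps sub by (auto intro: subspace_add subspace_scale)
      have "L (L y0 + s *\<^sub>R y0) = s *\<^sub>R (L y0 + s *\<^sub>R y0)"
        using LL by (simp add: bl_add[OF bl] bl_scaleR[OF bl] algebra_simps power2_eq_square)
      then show ?thesis using eig_le_spec_radius[OF bl zT False] s0 by fastforce
    qed
  qed
  then show ?thesis using bnd[OF y] by (meson mult_right_mono norm_ge_zero order_trans)
qed


lemma iter_conv:
  fixes F :: "'a::real_normed_vector \<Rightarrow> 'a" and M :: "'a set" and p :: 'a and r :: real
  assumes r: "0 \<le> r" "r < 1"
    and loc: "\<And>\<theta>. \<theta> > 0 \<Longrightarrow> \<exists>\<rho>>0. \<forall>x\<in>M. norm (x - p) < \<rho> \<longrightarrow> F x \<in> M \<and> norm (F x - p) \<le> (r + \<theta>) * norm (x - p)"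
  shows "\<exists>\<delta>>0. \<forall>\<theta>>0. \<exists>C>0. \<forall>x0\<in>M. norm (x0 - p) < \<delta> \<longrightarrow>
           (\<forall>k. norm ((F ^^ k) x0 - p) \<le> C * (r + \<theta>) ^ k * norm (x0 - p))"
proof -
  define \<theta>0 where "\<theta>0 = (1 - r) / 2"
  define q0 where "q0 = r + \<theta>0"
  have t0: "\<theta>0 > 0" and q0: "0 < q0" "q0 < 1" using r unfolding \<theta>0_def q0_def by (auto simp: field_simps)
  obtain \<delta> where d: "\<delta> > 0" and dl: "\<forall>x\<in>M. norm (x - p) < \<delta> \<longrightarrow> F x \<in> M \<and> norm (F x - p) \<le> q0 * norm (x - p)"
    using loc[OF t0] unfolding q0_def by blast
  have A: "(F ^^ k) x0 \<in> M \<and> norm ((F ^^ k) x0 - p) \<le> q0 ^ k * norm (x0 - p)"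
    if x0: "x0 \<in> M" "norm (x0 - p) < \<delta>" for x0 k
  proof (induction k)
    case 0 then show ?case using x0 by simp
  next
    case (Suc k)
    have "q0 ^ k * norm (x0 - p) \<le> 1 * norm (x0 - p)"
      using q0 by (intro mult_right_mono power_le_one) auto
    then have "norm ((F ^^ k) x0 - p) < \<delta>" using Suc x0 by linarith
    then have "F ((F ^^ k) x0) \<in> M \<and> norm (F ((F ^^ k) x0) - p) \<le> q0 * norm ((F ^^ k) x0 - p)"
      using dl Suc by blast
    moreover have "q0 * norm ((F ^^ k) x0 - p) \<le> q0 * (q0 ^ k * norm (x0 - p))"
      using Suc q0 by (intro mult_left_mono) auto
    ultimately show ?case by auto
  qed
  have "\<exists>C>0. \<forall>x0\<in>M. norm (x0 - p) < \<delta> \<longrightarrow>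
           (\<forall>k. norm ((F ^^ k) x0 - p) \<le> C * (r + \<theta>) ^ k * norm (x0 - p))" if th: "\<theta> > 0" for \<theta>
  proof (cases "\<theta> \<ge> \<theta>0")
    case True
    show ?thesis
    proof (intro exI[of _ 1] conjI ballI impI allI)
      fix x0 k assume "x0 \<in> M" "norm (x0 - p) < \<delta>"
      then have "norm ((F ^^ k) x0 - p) \<le> q0 ^ k * norm (x0 - p)" using A by blast
      also have "\<dots> \<le> (r + \<theta>) ^ k * norm (x0 - p)"
        using True q0 unfolding q0_def by (intro mult_right_mono power_mono) auto
      finally show "norm ((F ^^ k) x0 - p) \<le> 1 * (r + \<theta>) ^ k * norm (x0 - p)" by simp
    qed simp
  next
    case False
    define q where "q = r + \<theta>"
    have q: "q > 0" "q < q0" using th r False unfolding q_def q0_def by auto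
    obtain \<rho> where rho: "\<rho> > 0" and rl: "\<forall>x\<in>M. norm (x - p) < \<rho> \<longrightarrow> F x \<in> M \<and> norm (F x - p) \<le> q * norm (x - p)"
      using loc[OF th] unfolding q_def by blast
    obtain K where K: "q0 ^ K < \<rho> / \<delta>"
      using real_arch_pow_inv[of "\<rho> / \<delta>" q0] rho d q0 by auto
    define C where "C = (q0 / q) ^ K"
    have ratio: "q0 / q \<ge> 1" using q by simp
    have C: "C > 0" unfolding C_def using q q0 by simp
    show ?thesis
    proof (intro exI[of _ C] conjI ballI impI allI C)
      fix x0 k assume x0: "x0 \<in> M" "norm (x0 - p) < \<delta>"
      have small: "norm ((F ^^ (K + j)) x0 - p) < \<rho>" for j
      proof -
        have "norm ((F ^^ (K + j)) x0 - p) \<le> q0 ^ (K + j) * norm (x0 - p)" using A x0 by blast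
        also have "\<dots> \<le> q0 ^ K * norm (x0 - p)"
          using q0 by (intro mult_right_mono power_decreasing) auto
        also have "\<dots> \<le> q0 ^ K * \<delta>" using x0 q0 by (intro mult_left_mono) auto
        also have "\<dots> < \<rho>" using K d by (simp add: pos_less_divide_eq)
        finally show ?thesis .
      qed
      have B: "norm ((F ^^ (K + j)) x0 - p) \<le> q ^ j * norm ((F ^^ K) x0 - p)" for j
      proof (induction j)
        case 0 then show ?case by simp
      next
        case (Suc j)
        have "(F ^^ (K + j)) x0 \<in> M" using A x0 by blast
        then have "norm (F ((F ^^ (K + j)) x0) - p) \<le> q * norm ((F ^^ (K + j)) x0 - p)"
          using rl small[of j] by blast
        also have "\<dots> \<le> q * (q ^ j * norm ((F ^^ K) x0 - p))"
          using Suc q by (intro mult_left_mono) auto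
        finally show ?case by simp
      qed
      show "norm ((F ^^ k) x0 - p) \<le> C * (r + \<theta>) ^ k * norm (x0 - p)"
      proof (cases "k \<le> K")
        case True
        have "norm ((F ^^ k) x0 - p) \<le> q0 ^ k * norm (x0 - p)" using A x0 by blast
        also have "q0 ^ k = (q0 / q) ^ k * q ^ k" using q by (simp add: power_divide)
        also have "(q0 / q) ^ k \<le> C" unfolding C_def using ratio True by (intro power_increasing) auto
        then have "(q0 / q) ^ k * q ^ k * norm (x0 - p) \<le> C * q ^ k * norm (x0 - p)"
          using q by (intro mult_right_mono) auto
        finally show ?thesis unfolding q_def by simp
      next
        case False
        then obtain j where k: "k = K + j" by (metis le_add_diff_inverse nat_le_linear)
        have "norm ((F ^^ k) x0 - p) \<le> q ^ j * norm ((F ^^ K) x0 - p)" using B k by simp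
        also have "\<dots> \<le> q ^ j * (q0 ^ K * norm (x0 - p))"
          using A x0 q by (intro mult_left_mono) auto
        also have "q0 ^ K = C * q ^ K" unfolding C_def using q by (simp add: power_divide)
        finally show ?thesis unfolding q_def k by (simp add: power_add algebra_simps)
      qed
    qed
  qed
  then show ?thesis using d by blast
qed


lemma bl2_bound: "\<bar>blinfun_apply (blinfun_apply A X) Y\<bar> \<le> norm A * norm X * norm Y"
proof -
  have "\<bar>blinfun_apply (blinfun_apply A X) Y\<bar> \<le> norm (blinfun_apply A X) * norm Y"
    using norm_blinfun[of "blinfun_apply A X" Y] by simp
  also have "\<dots> \<le> norm A * norm X * norm Y" by (intro mult_right_mono norm_blinfun) auto
  finally show ?thesis .
qed

lemma sym_diff: "transpose A = A \<Longrightarrow> transpose B = B \<Longrightarrow> transpose (A - B) = (A - (B::real^'n^'n))"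
  by (simp add: transpose_diff)

locale setting =
  fixes E :: "real^'n^'n \<Rightarrow> real" and R :: "real^'n^'n \<Rightarrow> real^'n^'n" and Ps :: "real^'n^'n" and N :: nat
    and f' :: "real^'n^'n \<Rightarrow> (real^'n^'n) \<Rightarrow>\<^sub>L real"
    and f'' :: "real^'n^'n \<Rightarrow> (real^'n^'n) \<Rightarrow>\<^sub>L ((real^'n^'n) \<Rightarrow>\<^sub>L real)"
    and \<eta> \<epsilon> \<delta>R CR :: real
  assumes d1: "\<And>x. (E has_derivative blinfun_apply (f' x)) (at x)"
    and d2: "\<And>x. (f' has_derivative blinfun_apply (f'' x)) (at x)"
    and c2: "continuous_on UNIV f''"
    and Ps_in: "Ps \<in> MN N"
    and eta: "\<eta> > 0" and eps: "\<epsilon> > 0"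
    and nondeg: "\<And>P. P \<in> MN N \<Longrightarrow> norm (P - Ps) < \<epsilon> \<Longrightarrow> E P \<ge> E Ps + \<eta> * (norm (P - Ps))\<^sup>2"
    and dR: "\<delta>R > 0" and CR: "CR \<ge> 0"
    and retr: "\<And>P X. P \<in> MN N \<Longrightarrow> X \<in> Hsym \<Longrightarrow> norm X < \<delta>R \<Longrightarrow>
        R (P + X) \<in> MN N \<and> norm (R (P + X) - (P + PiP P X)) \<le> CR * (norm X)\<^sup>2"
begin

abbreviation "G \<equiv> gradH E Ps"

lemma MN_sym: "P \<in> MN N \<Longrightarrow> transpose P = P" unfolding MN_def Hsym_def by auto
lemma MN_idem: "P \<in> MN N \<Longrightarrow> P ** P = P" unfolding MN_def by auto
lemma P_sym: "transpose Ps = Ps" using MN_sym[OF Ps_in] .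
lemma P_idem: "Ps ** Ps = Ps" using MN_idem[OF Ps_in] .

lemma inner_G: "transpose D = D \<Longrightarrow> inner G D = blinfun_apply (f' Ps) D"
  using inner_gradH[of E f' Ps D] d1 by blast

lemma taylor_o:
  assumes e: "e > 0"
  shows "\<exists>r>0. \<forall>D. norm D < r \<longrightarrow>
    \<bar>E (Ps + D) - E Ps - blinfun_apply (f' Ps) D - 1/2 * blinfun_apply (blinfun_apply (f'' Ps) D) D\<bar> \<le> e * (norm D)\<^sup>2"
proof -
  have "isCont f'' Ps" using c2 by (simp add: continuous_on_eq_continuous_at)
  then obtain r where r: "r > 0" and rr: "\<And>x. dist x Ps < r \<Longrightarrow> dist (f'' x) (f'' Ps) < 2 * e"
    using e unfolding continuous_at_eps_delta by (metis mult_pos_pos zero_less_numeral)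
  have "\<bar>E (Ps + D) - E Ps - blinfun_apply (f' Ps) D - 1/2 * blinfun_apply (blinfun_apply (f'' Ps) D) D\<bar> \<le> e * (norm D)\<^sup>2"
    if D: "norm D < r" for D
  proof -
    obtain \<tau> where t: "0 \<le> \<tau>" "\<tau> \<le> 1" and tay: "E (Ps + D) = E Ps + blinfun_apply (f' Ps) D
      + 1/2 * blinfun_apply (blinfun_apply (f'' (Ps + \<tau> *\<^sub>R D)) D) D"
      using taylor2[OF d1 d2, of Ps D] by blast
    have "norm (\<tau> *\<^sub>R D) \<le> norm D" using t by (simp add: mult_left_le_one_le)
    then have "dist (Ps + \<tau> *\<^sub>R D) Ps < r" using D by (simp add: dist_norm)
    then have n: "norm (f'' (Ps + \<tau> *\<^sub>R D) - f'' Ps) \<le> 2 * e" using rr by (simp add: dist_norm less_imp_le)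
    have "E (Ps + D) - E Ps - blinfun_apply (f' Ps) D - 1/2 * blinfun_apply (blinfun_apply (f'' Ps) D) D
       = 1/2 * blinfun_apply (blinfun_apply (f'' (Ps + \<tau> *\<^sub>R D) - f'' Ps) D) D"
      using tay by (simp add: blinfun.diff_left algebra_simps)
    also have "\<bar>\<dots>\<bar> \<le> 1/2 * (norm (f'' (Ps + \<tau> *\<^sub>R D) - f'' Ps) * norm D * norm D)"
      using bl2_bound by simp
    also have "\<dots> \<le> 1/2 * (2 * e * norm D * norm D)"
      using n by (intro mult_left_mono mult_right_mono) auto
    finally show ?thesis by (simp add: power2_eq_square)
  qed
  then show ?thesis using r by blast
qed

lemma taylor_O:
  "\<exists>r>0. \<forall>D. norm D < r \<longrightarrow> E (Ps + D) - E Ps \<le> blinfun_apply (f' Ps) D + (norm (f'' Ps) + 1) * (norm D)\<^sup>2"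
proof -
  obtain r where r: "r > 0" and rr: "\<And>D. norm D < r \<Longrightarrow>
    \<bar>E (Ps + D) - E Ps - blinfun_apply (f' Ps) D - 1/2 * blinfun_apply (blinfun_apply (f'' Ps) D) D\<bar> \<le> 1 * (norm D)\<^sup>2"
    using taylor_o[of 1] by auto
  have "E (Ps + D) - E Ps \<le> blinfun_apply (f' Ps) D + (norm (f'' Ps) + 1) * (norm D)\<^sup>2" if "norm D < r" for D
  proof -
    have "\<bar>blinfun_apply (blinfun_apply (f'' Ps) D) D\<bar> \<le> norm (f'' Ps) * (norm D)\<^sup>2"
      using bl2_bound[of "f'' Ps" D D] by (simp add: power2_eq_square mult.assoc)
    moreover have "0 \<le> norm (f'' Ps) * (norm D)\<^sup>2" by simp
    ultimately show ?thesis using rr[OF that] by (simp add: algebra_simps abs_le_iff)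
  qed
  then show ?thesis using r by blast
qed

lemma curve:
  assumes X: "X \<in> Hsym" "PiP Ps X = X" and t: "\<bar>t\<bar> * norm X < \<delta>R"
  shows "R (Ps + t *\<^sub>R X) \<in> MN N \<and> norm (R (Ps + t *\<^sub>R X) - Ps - t *\<^sub>R X) \<le> CR * t\<^sup>2 * (norm X)\<^sup>2"
proof -
  have "t *\<^sub>R X \<in> Hsym" using X unfolding Hsym_def by (simp add: transpose_scalar)
  moreover have "norm (t *\<^sub>R X) < \<delta>R" using t by simp
  ultimately have "R (Ps + t *\<^sub>R X) \<in> MN N \<and> norm (R (Ps + t *\<^sub>R X) - (Ps + PiP Ps (t *\<^sub>R X))) \<le> CR * (norm (t *\<^sub>R X))\<^sup>2"
    using retr[OF Ps_in] by blast
  moreover have "PiP Ps (t *\<^sub>R X) = t *\<^sub>R X" using X(2) by (simp add: bl_scaleR[OF PiP_linear])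
  ultimately show ?thesis by (simp add: power_mult_distrib algebra_simps)
qed

lemma G_sym: "transpose G = G" by (rule gradH_sym)

lemma crit: "PiP Ps G = 0"
proof (rule ccontr)
  define Z where "Z = PiP Ps G"
  assume "PiP Ps G \<noteq> 0"
  then have Zn: "Z \<noteq> 0" unfolding Z_def .
  define z where "z = norm Z"
  have z: "z > 0" using Zn unfolding z_def by simp
  have ZH: "Z \<in> Hsym" unfolding Z_def Hsym_def using PiP_sym[OF P_sym G_sym] by simp
  have ZP: "PiP Ps Z = Z" unfolding Z_def using PiP_idem[OF P_idem] .
  have GZ: "inner G Z = z\<^sup>2"
  proof -
    have "inner G Z = inner G (PiP Ps Z)" using ZP by simp
    also have "\<dots> = inner Z Z" unfolding Z_def using PiP_selfadj[OF P_sym, of G Z] Z_def by simp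
    finally show ?thesis unfolding z_def by (simp add: dot_square_norm)
  qed
  obtain r1 where r1: "r1 > 0" and tay: "\<And>D. norm D < r1 \<Longrightarrow>
      E (Ps + D) - E Ps \<le> blinfun_apply (f' Ps) D + (norm (f'' Ps) + 1) * (norm D)\<^sup>2"
    using taylor_O by blast
  define M where "M = norm (f'' Ps) + 1"
  have M: "M > 0" unfolding M_def by (simp add: add_nonneg_pos)
  define a where "a = z + CR * z\<^sup>2"
  have a: "a > 0" unfolding a_def using z CR by (simp add: add_pos_nonneg)
  define b where "b = norm G * CR * z\<^sup>2 + M * a\<^sup>2"
  have b: "b \<ge> 0" unfolding b_def using CR M by simp
  define s where "s = min (min 1 (\<delta>R / (2 * z))) (min (min \<epsilon> r1 / (2 * a)) (z\<^sup>2 / (2 * b + 1)))"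
  have s: "s > 0" unfolding s_def using z a b dR eps r1 by auto
  have s1: "s \<le> 1" unfolding s_def by simp
  have s2: "s * z < \<delta>R"
  proof -
    have "s \<le> \<delta>R / (2 * z)" unfolding s_def by simp
    then have "s * z \<le> \<delta>R / 2" using z by (simp add: field_simps)
    then show ?thesis using dR by simp
  qed
  have s3: "s * a < min \<epsilon> r1"
  proof -
    have "s \<le> min \<epsilon> r1 / (2 * a)" unfolding s_def by simp
    then have "s * a \<le> min \<epsilon> r1 / 2" using a by (simp add: field_simps)
    then show ?thesis using eps r1 by simp
  qed
  have s4: "s * b < z\<^sup>2"
  proof -
    have "s \<le> z\<^sup>2 / (2 * b + 1)" unfolding s_def by simp
    then have "s * (2 * b + 1) \<le> z\<^sup>2" using b by (simp add: field_simps)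
    moreover have "s * b < s * (2 * b + 1)" using s b by (simp add: mult_strict_left_mono)
    ultimately show ?thesis by linarith
  qed
  define \<gamma> where "\<gamma> = R (Ps + (- s) *\<^sub>R Z)"
  have cv: "\<gamma> \<in> MN N \<and> norm (\<gamma> - Ps - (- s) *\<^sub>R Z) \<le> CR * (- s)\<^sup>2 * (norm Z)\<^sup>2"
    unfolding \<gamma>_def using curve[OF ZH ZP, of "- s"] s2 s unfolding z_def by simp
  define D where "D = \<gamma> - Ps"
  define W where "W = D + s *\<^sub>R Z"
  have W: "norm W \<le> CR * s\<^sup>2 * z\<^sup>2" using cv unfolding W_def D_def z_def by (simp add: algebra_simps)
  have Dsym: "transpose D = D" unfolding D_def using MN_sym[of \<gamma>] cv P_sym by (simp add: transpose_diff)
  have Dn: "norm D \<le> s * a"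
  proof -
    have "D = W - s *\<^sub>R Z" unfolding W_def by simp
    then have "norm D \<le> norm W + s * z" using s unfolding z_def by (metis norm_triangle_ineq4 norm_scaleR abs_of_pos)
    also have "\<dots> \<le> CR * s\<^sup>2 * z\<^sup>2 + s * z" using W by simp
    also have "CR * s\<^sup>2 * z\<^sup>2 \<le> CR * s * z\<^sup>2"
      using s s1 CR z by (intro mult_right_mono mult_left_mono) (auto simp: power2_eq_square mult_left_le_one_le)
    finally show ?thesis unfolding a_def by (simp add: algebra_simps)
  qed
  have Dsmall: "norm D < \<epsilon>" "norm D < r1" using Dn s3 by auto
  have "E \<gamma> \<ge> E Ps + \<eta> * (norm (\<gamma> - Ps))\<^sup>2" using nondeg cv Dsmall unfolding D_def by blast
  moreover have "0 \<le> \<eta> * (norm (\<gamma> - Ps))\<^sup>2" using eta by simp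
  ultimately have low: "0 \<le> E (Ps + D) - E Ps" unfolding D_def by simp
  have up: "E (Ps + D) - E Ps \<le> inner G D + M * (norm D)\<^sup>2"
    using tay[OF Dsmall(2)] inner_G[OF Dsym] unfolding M_def by simp
  have "inner G D = - s * z\<^sup>2 + inner G W"
    unfolding W_def using GZ by (simp add: inner_add_right)
  also have "inner G W \<le> norm G * (CR * s\<^sup>2 * z\<^sup>2)"
  proof -
    have "norm G * norm W \<le> norm G * (CR * s\<^sup>2 * z\<^sup>2)" using W by (intro mult_left_mono) auto
    then show ?thesis using Cauchy_Schwarz_ineq2[of G W] by linarith
  qed
  finally have gd: "inner G D \<le> - s * z\<^sup>2 + norm G * CR * s\<^sup>2 * z\<^sup>2" by (simp add: algebra_simps)
  have "(norm D)\<^sup>2 \<le> (s * a)\<^sup>2" using Dn by (intro power_mono) auto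
  then have md: "M * (norm D)\<^sup>2 \<le> M * s\<^sup>2 * a\<^sup>2" using M by (simp add: power_mult_distrib mult_left_mono)
  have "0 \<le> - s * z\<^sup>2 + s\<^sup>2 * b" using low up gd md unfolding b_def by (simp add: algebra_simps)
  then have "s * z\<^sup>2 \<le> s * (s * b)" by (simp add: power2_eq_square algebra_simps)
  then have "z\<^sup>2 \<le> s * b" using s by simp
  then show False using s4 by simp
qed

end


lemma assoc_zero: "A ** B = 0 \<Longrightarrow> Z ** A ** B = (0::real^'n^'n)"
  by (metis matrix_mul_assoc times0_right)
lemma assoc_zero3: "A ** B ** C = 0 \<Longrightarrow> Z ** A ** B ** C = (0::real^'n^'n)"
  by (metis matrix_mul_assoc times0_right)
lemma assoc_eq: "A ** B = C \<Longrightarrow> Z ** A ** B = Z ** (C::real^'n^'n)"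
  by (metis matrix_mul_assoc)

lemma Omega_alt:
  fixes P H X :: "real^'n^'n"
  assumes "transpose P = P" "transpose H = H" "transpose X = X"
  shows "Omega P H X = P ** X ** (mat 1 - P) ** H - H ** P ** X ** (mat 1 - P)
      + H ** (mat 1 - P) ** X ** P - (mat 1 - P) ** X ** P ** H"
  unfolding Omega_def Let_def using assms
  by (simp add: transpose_diff matrix_transpose_mul matrix_mul_assoc algebra_simps)

lemma Omega_sym:
  fixes P H X :: "real^'n^'n"
  shows "transpose (Omega P H X) = Omega P H X"
  unfolding Omega_def Let_def by (simp add: transpose_add add.commute)

lemma Omega_linear: "bounded_linear (Omega (P::real^'n^'n) H)"
  by (rule bounded_linearI')
     (simp_all add: Omega_def Let_def mm_simps transpose_add transpose_diff transpose_scalar algebra_simps)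

lemma Omega_tangent:
  fixes P H X :: "real^'n^'n"
  assumes P: "transpose P = P" "P ** P = P" and H: "transpose H = H"
    and c1: "P ** H ** (mat 1 - P) = 0" and c2: "(mat 1 - P) ** H ** P = 0"
    and X: "transpose X = X"
  shows "Omega P H X \<in> tangent P"
proof -
  define Q where "Q = mat 1 - P"
  have QQ: "Q ** Q = Q" "P ** Q = 0" "Q ** P = 0" unfolding Q_def using P(2) by (simp_all add: mm_simps)
  have c: "P ** H ** Q = 0" "Q ** H ** P = 0" using c1 c2 unfolding Q_def by auto
  note rules = QQ c assoc_zero[OF QQ(2)] assoc_zero[OF QQ(3)] assoc_eq[OF QQ(1)] assoc_eq[OF P(2)]
    assoc_zero3[OF c(1)] assoc_zero3[OF c(2)] P(2)
  have om: "Omega P H X = P ** X ** Q ** H - H ** P ** X ** Q + H ** Q ** X ** P - Q ** X ** P ** H"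
    unfolding Q_def using Omega_alt[OF P(1) H X] .
  have "P ** Omega P H X ** P = 0"
    unfolding om by (simp add: mm_simps rules)
  moreover have "Q ** Omega P H X ** Q = 0"
    unfolding om by (simp add: mm_simps rules)
  ultimately show ?thesis unfolding tangent_def Hsym_def Q_def[symmetric] using Omega_sym by auto
qed


lemma tangent_facts:
  fixes P X :: "real^'n^'n"
  assumes P: "P ** P = P" and X: "X \<in> tangent P"
  shows "X = P ** X ** (mat 1 - P) + (mat 1 - P) ** X ** P"
    "(mat 1 - P) ** X = (mat 1 - P) ** X ** P" "X ** (mat 1 - P) = P ** X ** (mat 1 - P)"
    "P ** X = P ** X ** (mat 1 - P)" "X ** P = (mat 1 - P) ** X ** P"
proof -
  have a: "P ** X ** P = 0" "(mat 1 - P) ** X ** (mat 1 - P) = 0"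
    using X unfolding tangent_def by auto
  show "X = P ** X ** (mat 1 - P) + (mat 1 - P) ** X ** P"
    using tangent_PiP[OF X] unfolding PiP_def by simp
  have "(mat 1 - P) ** X = (mat 1 - P) ** X ** (P + (mat 1 - P))" by simp
  also have "\<dots> = (mat 1 - P) ** X ** P" using a(2) by (simp only: matrix_add_ldistrib) simp
  finally show "(mat 1 - P) ** X = (mat 1 - P) ** X ** P" .
  have "X ** (mat 1 - P) = (P + (mat 1 - P)) ** X ** (mat 1 - P)" by simp
  also have "\<dots> = P ** X ** (mat 1 - P)" using a(2) by (simp only: mm_rdistrib) simp
  finally show "X ** (mat 1 - P) = P ** X ** (mat 1 - P)" .
  have "P ** X = P ** X ** (P + (mat 1 - P))" by simp
  also have "\<dots> = P ** X ** (mat 1 - P)" using a(1) by (simp only: matrix_add_ldistrib) simp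
  finally show "P ** X = P ** X ** (mat 1 - P)" .
  have "X ** P = (P + (mat 1 - P)) ** X ** P" by simp
  also have "\<dots> = (mat 1 - P) ** X ** P" using a(1) by (simp only: mm_rdistrib) simp
  finally show "X ** P = (mat 1 - P) ** X ** P" .
qed

lemma Omega_inner:
  fixes P H X Y :: "real^'n^'n"
  assumes P: "transpose P = P" "P ** P = P" and H: "transpose H = H"
    and X: "X \<in> tangent P" and Y: "Y \<in> tangent P"
  shows "inner (Omega P H X) Y = 2 * (inner H (((mat 1 - P) ** X ** P) ** (P ** Y ** (mat 1 - P)))
      - inner H ((P ** Y ** (mat 1 - P)) ** ((mat 1 - P) ** X ** P)))"
proof -
  define Q where "Q = mat 1 - P"
  have QQ: "Q ** Q = Q" "P ** Q = 0" "Q ** P = 0" "transpose Q = Q"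
    unfolding Q_def using P by (simp_all add: mm_simps transpose_diff)
  have Xs: "transpose X = X" and Ys: "transpose Y = Y" using X Y unfolding tangent_def Hsym_def by auto
  define a where "a = P ** X ** Q"
  define b where "b = Q ** X ** P"
  have ta: "transpose a = b" unfolding a_def b_def using P QQ Xs by (simp add: matrix_transpose_mul matrix_mul_assoc)
  have Ysplit: "Y = P ** Y ** Q + Q ** Y ** P" using tangent_facts(1)[OF P(2) Y] unfolding Q_def .
  define Y0 where "Y0 = a ** H - H ** a"
  have om: "Omega P H X = Y0 + transpose Y0"
    unfolding Omega_def Let_def Y0_def a_def Q_def by (simp add: matrix_mul_assoc)
  have "inner (transpose Y0) Y = inner Y0 Y" using inner_transpose[of Y0 Y] Ys by simp
  then have "inner (Omega P H X) Y = 2 * inner Y0 Y" unfolding om by (simp add: inner_add_left)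
  also have "inner Y0 Y = inner H (b ** Y) - inner H (Y ** b)"
    unfolding Y0_def using inner_mm_left[of a H Y] inner_mm_right[of H a Y] by (simp add: inner_diff_left ta)
  also have "b ** Y = b ** (P ** Y ** Q)"
  proof -
    have "b ** (Q ** Y ** P) = 0" unfolding b_def using QQ by (metis matrix_mul_assoc times0_left times0_right)
    then show ?thesis by (subst Ysplit) (simp add: matrix_add_ldistrib)
  qed
  also have "Y ** b = (P ** Y ** Q) ** b"
  proof -
    have "(Q ** Y ** P) ** b = 0" unfolding b_def using QQ by (metis matrix_mul_assoc times0_left times0_right)
    then show ?thesis by (subst Ysplit) (simp add: mm_rdistrib)
  qed
  finally show ?thesis unfolding b_def Q_def by simp
qed

lemma Omega_symT:
  fixes P H X Y :: "real^'n^'n"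
  assumes P: "transpose P = P" "P ** P = P" and H: "transpose H = H"
    and X: "X \<in> tangent P" and Y: "Y \<in> tangent P"
  shows "inner (Omega P H X) Y = inner X (Omega P H Y)"
proof -
  define Q where "Q = mat 1 - P"
  have tQ: "transpose Q = Q" unfolding Q_def using P by (simp add: transpose_diff)
  have Xs: "transpose X = X" and Ys: "transpose Y = Y" using X Y unfolding tangent_def Hsym_def by auto
  have tr: "inner H (A ** B) = inner H (transpose B ** transpose A)" for A B
    using inner_transpose[of H "A ** B"] H by (simp add: matrix_transpose_mul)
  have t1: "transpose (Q ** Z ** P) = P ** Z ** Q" "transpose (P ** Z ** Q) = Q ** Z ** P"
    if "transpose Z = Z" for Z
    using that P tQ by (simp_all add: matrix_transpose_mul matrix_mul_assoc)
  have "inner (Omega P H X) Y = 2 * (inner H ((Q ** X ** P) ** (P ** Y ** Q)) - inner H ((P ** Y ** Q) ** (Q ** X ** P)))"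
    using Omega_inner[OF P H X Y] unfolding Q_def .
  also have "\<dots> = 2 * (inner H ((Q ** Y ** P) ** (P ** X ** Q)) - inner H ((P ** X ** Q) ** (Q ** Y ** P)))"
    by (simp add: tr[of "Q ** X ** P"] tr[of "P ** Y ** Q"] t1 Xs Ys)
  also have "\<dots> = inner (Omega P H Y) X"
    using Omega_inner[OF P H Y X] unfolding Q_def by simp
  finally show ?thesis by (simp add: inner_commute)
qed

lemma Omega_quad:
  fixes P H X :: "real^'n^'n"
  assumes P: "transpose P = P" "P ** P = P" and H: "transpose H = H"
    and X: "X \<in> tangent P"
  shows "inner (Omega P H X) X = 2 * inner H ((mat 1 - P) ** (X ** X) ** (mat 1 - P) - P ** (X ** X) ** P)"
proof -
  note tf = tangent_facts[OF P(2) X]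
  have e1: "(mat 1 - P) ** (X ** X) ** (mat 1 - P) = ((mat 1 - P) ** X ** P) ** (P ** X ** (mat 1 - P))"
  proof -
    have "(mat 1 - P) ** (X ** X) ** (mat 1 - P) = ((mat 1 - P) ** X) ** (X ** (mat 1 - P))"
      by (simp add: matrix_mul_assoc)
    then show ?thesis using tf(2,3) by simp
  qed
  have e2: "P ** (X ** X) ** P = (P ** X ** (mat 1 - P)) ** ((mat 1 - P) ** X ** P)"
  proof -
    have "P ** (X ** X) ** P = (P ** X) ** (X ** P)"
      by (simp add: matrix_mul_assoc)
    then show ?thesis using tf(4,5) by simp
  qed
  show ?thesis unfolding Omega_inner[OF P H X X] e1 e2 by (simp add: inner_diff_right)
qed


lemma subspace_tangent:
  fixes P :: "real^'n^'n"
  shows "subspace (tangent P)"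
  unfolding subspace_def
proof (intro conjI ballI allI)
  show "0 \<in> tangent P" unfolding tangent_def Hsym_def by simp
next
  fix X Y assume "X \<in> tangent P" "Y \<in> tangent P"
  then show "X + Y \<in> tangent P" unfolding tangent_def Hsym_def
    by (simp add: matrix_add_ldistrib mm_rdistrib transpose_add)
next
  fix c :: real and X assume "X \<in> tangent P"
  then show "c *\<^sub>R X \<in> tangent P" unfolding tangent_def Hsym_def
    by (simp add: mm_lscale mm_rscale transpose_scalar)
qed

lemma lower_sq: "0 \<le> u \<Longrightarrow> 0 \<le> w \<Longrightarrow> u - w \<le> d \<Longrightarrow> 0 \<le> d \<Longrightarrow> u\<^sup>2 - 2 * u * w \<le> (d::real)\<^sup>2"
proof (cases "u - w \<ge> 0")
  case True
  assume "u - w \<le> d" "0 \<le> w"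
  then have "(u - w)\<^sup>2 \<le> d\<^sup>2" using True by (intro power_mono) auto
  then show ?thesis by (simp add: power2_eq_square algebra_simps) (smt (verit) \<open>0 \<le> w\<close> mult_nonneg_nonneg)
next
  case False
  assume "0 \<le> u" "0 \<le> w"
  then have "u * (u - 2 * w) \<le> 0" using False by (intro mult_nonneg_nonpos) auto
  then show ?thesis by (simp add: power2_eq_square algebra_simps) (smt (verit) zero_le_square)
qed

context setting
begin

abbreviation "Q \<equiv> mat 1 - Ps"
abbreviation "Hs \<equiv> hessH E Ps"
abbreviation "J \<equiv> Jgrad E Ps"
abbreviation "T \<equiv> tangent Ps"

lemma PGQ: "Ps ** G ** Q = 0" "Q ** G ** Ps = 0"
proof -
  have QQ: "Q ** Q = Q" "Ps ** Q = 0" "Q ** Ps = 0" using proj_basic[OF P_idem] by auto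
  have c: "Ps ** G ** Q + Q ** G ** Ps = 0" using crit unfolding PiP_def .
  have "Ps ** (Ps ** G ** Q + Q ** G ** Ps) ** Q = Ps ** G ** Q"
    by (simp add: matrix_add_ldistrib mm_rdistrib matrix_mul_assoc QQ P_idem)
       (metis QQ(1) QQ(2) matrix_mul_assoc P_idem times0_left times0_right add_0_right)
  then show "Ps ** G ** Q = 0" using c by simp
  have "Q ** (Ps ** G ** Q + Q ** G ** Ps) ** Ps = Q ** G ** Ps"
    by (simp add: matrix_add_ldistrib mm_rdistrib matrix_mul_assoc QQ P_idem)
       (metis QQ matrix_mul_assoc P_idem times0_left times0_right add_0_left)
  then show "Q ** G ** Ps = 0" using c by simp
qed

lemma Hs_eq: "Hs = (\<lambda>A. symm (\<Sum>b\<in>Basis. blinfun_apply (blinfun_apply (f'' Ps) A) b *\<^sub>R b))"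
  using hessH_eq[of E f' f'' Ps] d1 d2 by blast

lemma Hs_deriv: "(gradH E has_derivative Hs) (at Ps)"
  unfolding Hs_eq using gradH_deriv[of E f' f'' Ps] d1 d2 by blast

lemma Hs_lin: "bounded_linear Hs"
  using has_derivative_bounded_linear[OF Hs_deriv] .

lemma Hs_sym: "transpose (Hs A) = Hs A"
  unfolding Hs_eq by (rule symm_sym)

lemma Hs_inner: "transpose Y = Y \<Longrightarrow> inner (Hs A) Y = blinfun_apply (blinfun_apply (f'' Ps) A) Y"
  using inner_hessH[of E f' f'' Ps Y A] d1 d2 by blast

lemma Hs_selfadj:
  assumes "transpose A = A" "transpose B = B"
  shows "inner (Hs A) B = inner A (Hs B)"
proof -
  have "inner (Hs A) B = blinfun_apply (blinfun_apply (f'' Ps) A) B" using Hs_inner[OF assms(2)] .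
  also have "\<dots> = blinfun_apply (blinfun_apply (f'' Ps) B) A" using schwarz[OF d1 d2 c2] .
  also have "\<dots> = inner (Hs B) A" using Hs_inner[OF assms(1)] by simp
  finally show ?thesis by (simp add: inner_commute)
qed

lemma tangent_sym: "X \<in> T \<Longrightarrow> transpose X = X" unfolding tangent_def Hsym_def by auto

lemma J_alt: "X \<in> T \<Longrightarrow> J X = Omega Ps G X + PiP Ps (Hs X)"
  unfolding Jgrad_def Kop_def using tangent_PiP[of X Ps] by simp

lemma J_lin: "bounded_linear J"
proof -
  have "J = (\<lambda>X. Omega Ps G X + PiP Ps (Hs (PiP Ps X)))"
    unfolding Jgrad_def[abs_def] Kop_def by simp
  moreover have "bounded_linear (\<lambda>X. Omega Ps G X + PiP Ps (Hs (PiP Ps X)))"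
    by (intro bounded_linear_add Omega_linear bounded_linear_compose[OF PiP_linear]
        bounded_linear_compose[OF Hs_lin] PiP_linear)
  ultimately show ?thesis by simp
qed

lemma J_maps: "X \<in> T \<Longrightarrow> J X \<in> T"
  unfolding J_alt
  by (intro subspace_add[OF subspace_tangent] Omega_tangent P_sym P_idem G_sym PGQ
      tangent_sym PiP_tangent Hs_sym)

lemma J_sym: "X \<in> T \<Longrightarrow> Y \<in> T \<Longrightarrow> inner (J X) Y = inner X (J Y)"
proof -
  assume X: "X \<in> T" and Y: "Y \<in> T"
  have "inner (PiP Ps (Hs X)) Y = inner X (PiP Ps (Hs Y))"
  proof -
    have "inner (PiP Ps (Hs X)) Y = inner (Hs X) (PiP Ps Y)" by (rule PiP_selfadj[OF P_sym])
    also have "\<dots> = inner (Hs X) Y" using tangent_PiP[OF Y] by simp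
    also have "\<dots> = inner X (Hs Y)" using Hs_selfadj tangent_sym X Y by blast
    also have "\<dots> = inner (PiP Ps X) (Hs Y)" using tangent_PiP[OF X] by simp
    also have "\<dots> = inner X (PiP Ps (Hs Y))" by (rule PiP_selfadj[OF P_sym])
    finally show ?thesis .
  qed
  then show ?thesis
    unfolding J_alt[OF X] J_alt[OF Y]
    using Omega_symT[OF P_sym P_idem G_sym X Y] by (simp add: inner_add_left inner_add_right)
qed

definition bq :: "real^'n^'n \<Rightarrow> real^'n^'n \<Rightarrow> real" where
  "bq Y1 Y2 = inner G (Q ** (Y1 ** Y2) ** Q - Ps ** (Y1 ** Y2) ** Ps)
     + 1/2 * blinfun_apply (blinfun_apply (f'' Ps) Y1) Y2"

lemma bq_bilinear: "bounded_bilinear bq"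
proof -
  have "bilinear bq"
    unfolding bilinear_def linear_iff bq_def
    by (simp add: mm_simps inner_add_right inner_diff_right blinfun.add_left blinfun.add_right
        blinfun.scaleR_left blinfun.scaleR_right algebra_simps)
  then show ?thesis using bilinear_conv_bounded_bilinear by blast
qed

lemma J_quad: "X \<in> T \<Longrightarrow> inner (J X) X = 2 * bq X X"
proof -
  assume X: "X \<in> T"
  have "inner (PiP Ps (Hs X)) X = inner (Hs X) X"
    using PiP_selfadj[OF P_sym, of "Hs X" X] tangent_PiP[OF X] by simp
  also have "\<dots> = blinfun_apply (blinfun_apply (f'' Ps) X) X" using Hs_inner tangent_sym[OF X] by blast
  finally show ?thesis
    unfolding J_alt[OF X] bq_def using Omega_quad[OF P_sym P_idem G_sym X]
    by (simp add: inner_add_left)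
qed

lemma bq_MN:
  assumes P': "P' \<in> MN N"
  shows "blinfun_apply (f' Ps) (P' - Ps) + 1/2 * blinfun_apply (blinfun_apply (f'' Ps) (P' - Ps)) (P' - Ps)
       = bq (P' - Ps) (P' - Ps)"
proof -
  define D where "D = P' - Ps"
  have Ds: "transpose D = D" unfolding D_def using MN_sym[OF P'] P_sym by (simp add: transpose_diff)
  have "blinfun_apply (f' Ps) D = inner G D" using inner_G[OF Ds] by simp
  also have "\<dots> = inner G (D - PiP Ps D) + inner G (PiP Ps D)" by (simp add: inner_diff_right)
  also have "inner G (PiP Ps D) = 0" using PiP_selfadj[OF P_sym, of G D] crit by simp
  also have "D - PiP Ps D = Q ** (D ** D) ** Q - Ps ** (D ** D) ** Ps"
    unfolding D_def by (rule MN_dev[OF P_idem MN_idem[OF P']])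
  finally show ?thesis unfolding D_def bq_def by simp
qed

lemma positivity:
  assumes X: "X \<in> T"
  shows "\<eta> * (norm X)\<^sup>2 \<le> bq X X"
proof (rule ccontr)
  assume neg: "\<not> ?thesis"
  then have Xn: "X \<noteq> 0" using bounded_bilinear.zero_left[OF bq_bilinear] eta by auto
  define x where "x = norm X"
  have x: "x > 0" using Xn unfolding x_def by simp
  define a where "a = x + CR * x\<^sup>2"
  have a: "a > 0" unfolding a_def using x CR by (simp add: add_pos_nonneg)
  define e where "e = (\<eta> * x\<^sup>2 - bq X X) / (2 * (1 + a\<^sup>2))"
  have e: "e > 0" unfolding e_def using neg x_def by (simp add: add_pos_nonneg)
  obtain r where r: "r > 0" and tay: "\<And>D. norm D < r \<Longrightarrow>
    \<bar>E (Ps + D) - E Ps - blinfun_apply (f' Ps) D - 1/2 * blinfun_apply (blinfun_apply (f'' Ps) D) D\<bar> \<le> e * (norm D)\<^sup>2"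
    using taylor_o[OF e] by blast
  obtain Kb where Kb: "Kb > 0" "\<And>u v. norm (bq u v) \<le> norm u * norm v * Kb"
    using bounded_bilinear.pos_bounded[OF bq_bilinear] by blast
  define c1 where "c1 = 2 * \<eta> * CR * x ^ 3 + Kb * (CR\<^sup>2 * x ^ 4 + 2 * CR * x ^ 3)"
  have c1: "c1 \<ge> 0" unfolding c1_def using eta CR x Kb by simp
  define t where "t = min (min 1 (\<delta>R / (2 * x))) (min (min \<epsilon> r / (2 * a)) (e / (c1 + 1)))"
  have t: "t > 0" unfolding t_def using x a dR eps r e c1 by auto
  have t1: "t \<le> 1" unfolding t_def by simp
  have t2: "t * x < \<delta>R"
  proof -
    have "t \<le> \<delta>R / (2 * x)" unfolding t_def by simp
    then have "t * x \<le> \<delta>R / 2" using x by (simp add: field_simps)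
    then show ?thesis using dR by simp
  qed
  have t3: "t * a < min \<epsilon> r"
  proof -
    have "t \<le> min \<epsilon> r / (2 * a)" unfolding t_def by simp
    then have "t * a \<le> min \<epsilon> r / 2" using a by (simp add: field_simps)
    then show ?thesis using eps r by simp
  qed
  have t4: "t * c1 \<le> e"
  proof -
    have "t \<le> e / (c1 + 1)" unfolding t_def by simp
    then have "t * (c1 + 1) \<le> e" using c1 by (simp add: field_simps)
    then show ?thesis using t by (simp add: algebra_simps)
  qed
  have XH: "X \<in> Hsym" using X unfolding tangent_def by auto
  define \<gamma> where "\<gamma> = R (Ps + t *\<^sub>R X)"
  have cv: "\<gamma> \<in> MN N \<and> norm (\<gamma> - Ps - t *\<^sub>R X) \<le> CR * t\<^sup>2 * x\<^sup>2"
    unfolding \<gamma>_def x_def using curve[OF XH tangent_PiP[OF X], of t] t t2 unfolding x_def by simp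
  define D where "D = \<gamma> - Ps"
  define W where "W = D - t *\<^sub>R X"
  have W: "norm W \<le> CR * t\<^sup>2 * x\<^sup>2" using cv unfolding W_def D_def by simp
  have W0: "CR * t\<^sup>2 * x\<^sup>2 \<ge> 0" using CR by simp
  have Dup: "norm D \<le> t * a"
  proof -
    have "norm D \<le> norm W + t * x" unfolding W_def x_def using t
      by (metis add.commute diff_add_cancel norm_scaleR abs_of_pos norm_triangle_ineq)
    also have "CR * t\<^sup>2 * x\<^sup>2 \<le> CR * t * x\<^sup>2"
      using t t1 CR x by (intro mult_right_mono mult_left_mono) (auto simp: power2_eq_square mult_left_le_one_le)
    then have "norm W + t * x \<le> CR * t * x\<^sup>2 + t * x" using W by simp
    finally show ?thesis unfolding a_def by (simp add: algebra_simps)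
  qed
  have Dlow: "t * x - CR * t\<^sup>2 * x\<^sup>2 \<le> norm D"
  proof -
    have "t * x = norm (t *\<^sub>R X)" unfolding x_def using t by simp
    also have "\<dots> \<le> norm D + norm W" unfolding W_def
      by (metis add.commute diff_add_cancel norm_minus_commute norm_triangle_ineq4 add_diff_cancel_left')
    finally show ?thesis using W by simp
  qed
  have Dsmall: "norm D < \<epsilon>" "norm D < r" using Dup t3 by auto
  have low: "E (Ps + D) - E Ps \<ge> \<eta> * (norm D)\<^sup>2"
    using nondeg[of \<gamma>] cv Dsmall unfolding D_def by simp
  have up: "E (Ps + D) - E Ps \<le> bq D D + e * (norm D)\<^sup>2"
    using tay[OF Dsmall(2)] bq_MN[of \<gamma>] cv unfolding D_def by (simp add: abs_le_iff)
  have bqdiff: "bq D D - bq (t *\<^sub>R X) (t *\<^sub>R X) = bq W W + bq W (t *\<^sub>R X) + bq (t *\<^sub>R X) W"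
    unfolding W_def by (rule bounded_bilinear.prod_diff_prod[OF bq_bilinear])
  have bqs: "bq (t *\<^sub>R X) (t *\<^sub>R X) = t\<^sup>2 * bq X X"
    by (simp add: bounded_bilinear.scaleR_left[OF bq_bilinear] bounded_bilinear.scaleR_right[OF bq_bilinear]
        power2_eq_square)
  have "\<bar>bq W W + bq W (t *\<^sub>R X) + bq (t *\<^sub>R X) W\<bar> \<le> Kb * (norm W * norm W + 2 * (t * x) * norm W)"
  proof -
    have "\<bar>bq W W\<bar> \<le> norm W * norm W * Kb" using Kb(2)[of W W] by simp
    moreover have "\<bar>bq W (t *\<^sub>R X)\<bar> \<le> norm W * (t * x) * Kb" using Kb(2)[of W "t *\<^sub>R X"] t unfolding x_def by simp
    moreover have "\<bar>bq (t *\<^sub>R X) W\<bar> \<le> (t * x) * norm W * Kb" using Kb(2)[of "t *\<^sub>R X" W] t unfolding x_def by simp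
    ultimately show ?thesis by (simp add: algebra_simps)
  qed
  also have "Kb * (norm W * norm W + 2 * (t * x) * norm W) \<le> Kb * ((CR * t\<^sup>2 * x\<^sup>2) * (CR * t\<^sup>2 * x\<^sup>2) + 2 * (t * x) * (CR * t\<^sup>2 * x\<^sup>2))"
    using W W0 Kb t x by (intro mult_left_mono add_mono mult_mono) auto
  also have "\<dots> = t ^ 3 * (Kb * (CR\<^sup>2 * t * x ^ 4 + 2 * CR * x ^ 3))"
    by (simp add: eval_nat_numeral algebra_simps)
  also have "\<dots> \<le> t ^ 3 * (Kb * (CR\<^sup>2 * x ^ 4 + 2 * CR * x ^ 3))"
  proof -
    have "CR\<^sup>2 * t * x ^ 4 \<le> CR\<^sup>2 * x ^ 4"
      using t t1 by (intro mult_right_mono) (auto simp: mult_right_le_one_le)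
    then show ?thesis using t Kb by (intro mult_left_mono) auto
  qed
  finally have errb: "\<bar>bq D D - t\<^sup>2 * bq X X\<bar> \<le> t ^ 3 * (Kb * (CR\<^sup>2 * x ^ 4 + 2 * CR * x ^ 3))"
    using bqdiff bqs by simp
  have "t\<^sup>2 * (x\<^sup>2 - 2 * CR * t * x ^ 3) \<le> (norm D)\<^sup>2"
  proof -
    have "(t * x)\<^sup>2 - 2 * (t * x) * (CR * t\<^sup>2 * x\<^sup>2) \<le> (norm D)\<^sup>2"
      by (rule lower_sq) (use t x W0 Dlow in auto)
    then show ?thesis by (simp add: power2_eq_square power3_eq_cube algebra_simps)
  qed
  then have l2: "\<eta> * (t\<^sup>2 * (x\<^sup>2 - 2 * CR * t * x ^ 3)) \<le> \<eta> * (norm D)\<^sup>2"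
    using eta by simp
  have "(norm D)\<^sup>2 \<le> (t * a)\<^sup>2" using Dup by (intro power_mono) auto
  then have u2: "e * (norm D)\<^sup>2 \<le> e * (t\<^sup>2 * a\<^sup>2)" using e by (simp add: power_mult_distrib)
  have "\<eta> * (t\<^sup>2 * (x\<^sup>2 - 2 * CR * t * x ^ 3)) \<le> t\<^sup>2 * bq X X + t ^ 3 * (Kb * (CR\<^sup>2 * x ^ 4 + 2 * CR * x ^ 3)) + e * (t\<^sup>2 * a\<^sup>2)"
    using l2 low up errb u2 by (simp add: abs_le_iff)
  then have "t\<^sup>2 * (\<eta> * x\<^sup>2) \<le> t\<^sup>2 * (bq X X + t * c1 + e * a\<^sup>2)"
    unfolding c1_def by (simp add: eval_nat_numeral algebra_simps)
  then have "\<eta> * x\<^sup>2 \<le> bq X X + t * c1 + e * a\<^sup>2" using t by simp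
  then have "\<eta> * x\<^sup>2 \<le> bq X X + e * (1 + a\<^sup>2)" using t4 by (simp add: algebra_simps)
  moreover have "e * (1 + a\<^sup>2) = (\<eta> * x\<^sup>2 - bq X X) / 2"
  proof -
    have "1 + a\<^sup>2 > 0" by (simp add: add_pos_nonneg)
    then show ?thesis unfolding e_def by (simp add: field_simps)
  qed
  ultimately have "\<eta> * x\<^sup>2 - bq X X \<le> (\<eta> * x\<^sup>2 - bq X X) / 2" by linarith
  moreover have "\<eta> * x\<^sup>2 - bq X X > 0" using neg unfolding x_def by linarith
  ultimately show False by (rule half_absurd)
qed

lemma J_pos: "X \<in> T \<Longrightarrow> 2 * \<eta> * (norm X)\<^sup>2 \<le> inner (J X) X"
  using positivity J_quad by simp

end


lemma comm_alg:
  fixes P G a b :: "real^'n^'n"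
  assumes PP: "P ** P = P" and GP: "G ** P = P ** G"
    and a1: "P ** a = a" and a2: "a ** P = 0" and b1: "P ** b = 0" and b2: "b ** P = b"
  shows "(a+b) ** G ** (mat 1 - P) - P ** G ** (a+b) + (mat 1 - P) ** G ** (a+b) - (a+b) ** G ** P
    = P ** (a+b) ** (mat 1 - P) ** G - G ** P ** (a+b) ** (mat 1 - P) + G ** (mat 1 - P) ** (a+b) ** P
      - (mat 1 - P) ** (a+b) ** P ** G"
proof -
  have PGa: "P ** G ** a = G ** a" by (metis GP a1 matrix_mul_assoc)
  have PGb: "P ** G ** b = 0" by (metis GP b1 matrix_mul_assoc times0_right)
  note rules = PP GP a1 a2 b1 b2 PGa PGb assoc_eq[OF PP] assoc_eq[OF GP] assoc_eq[OF a1] assoc_zero[OF a2]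
    assoc_zero[OF b1] assoc_eq[OF b2] assoc_eq[OF PGa] assoc_zero3[OF PGb]
  show ?thesis by (simp add: mm_simps rules algebra_simps)
qed

lemma mm_deriv:
  fixes u v :: "real^'n^'n \<Rightarrow> real^'n^'n"
  assumes "(u has_derivative u') (at x)" "(v has_derivative v') (at x)"
  shows "((\<lambda>x. u x ** v x) has_derivative (\<lambda>h. u x ** v' h + u' h ** v x)) (at x)"
  using bounded_bilinear.FDERIV[OF bounded_bilinear_mm assms] by simp

context setting
begin

definition Phi :: "real^'n^'n \<Rightarrow> real^'n^'n" where
  "Phi P = PiP P (gradH E P)"

definition dPhi :: "real^'n^'n \<Rightarrow> real^'n^'n" where
  "dPhi h = h ** G ** Q - Ps ** G ** h + Ps ** Hs h ** Q + Q ** Hs h ** Ps + Q ** G ** h - h ** G ** Ps"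

lemma Phi_deriv: "(Phi has_derivative dPhi) (at Ps)"
proof -
  have id: "((\<lambda>P. P) has_derivative (\<lambda>h. h)) (at Ps)" by (rule has_derivative_ident)
  have mi: "((\<lambda>P::real^'n^'n. mat 1 - P) has_derivative (\<lambda>h. - h)) (at Ps)"
    by (auto intro!: derivative_eq_intros)
  have e1: "((\<lambda>P. P ** gradH E P) has_derivative (\<lambda>h. Ps ** Hs h + h ** G)) (at Ps)"
    using mm_deriv[OF id Hs_deriv] .
  have e2: "((\<lambda>P. P ** gradH E P ** (mat 1 - P)) has_derivative (\<lambda>h. (Ps ** G) ** (- h) + (Ps ** Hs h + h ** G) ** Q)) (at Ps)"
    using mm_deriv[OF e1 mi] .
  have e3: "((\<lambda>P. (mat 1 - P) ** gradH E P) has_derivative (\<lambda>h. Q ** Hs h + (- h) ** G)) (at Ps)"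
    using mm_deriv[OF mi Hs_deriv] .
  have e4: "((\<lambda>P. (mat 1 - P) ** gradH E P ** P) has_derivative (\<lambda>h. (Q ** G) ** h + (Q ** Hs h + (- h) ** G) ** Ps)) (at Ps)"
    using mm_deriv[OF e3 id] .
  have "((\<lambda>P. P ** gradH E P ** (mat 1 - P) + (mat 1 - P) ** gradH E P ** P) has_derivative
     (\<lambda>h. ((Ps ** G) ** (- h) + (Ps ** Hs h + h ** G) ** Q) + ((Q ** G) ** h + (Q ** Hs h + (- h) ** G) ** Ps))) (at Ps)"
    by (rule has_derivative_add[OF e2 e4])
  moreover have "(\<lambda>h. ((Ps ** G) ** (- h) + (Ps ** Hs h + h ** G) ** Q) + ((Q ** G) ** h + (Q ** Hs h + (- h) ** G) ** Ps)) = dPhi"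
    unfolding dPhi_def by (rule ext) (simp add: mm_rdistrib mm_rdiff mm_lminus mm_rminus matrix_mul_assoc algebra_simps)
  ultimately show ?thesis unfolding Phi_def[abs_def] PiP_def by simp
qed

lemma dPhi_lin: "bounded_linear dPhi"
  using has_derivative_bounded_linear[OF Phi_deriv] .

lemma Phi_Ps: "Phi Ps = 0" unfolding Phi_def using crit .

lemma GP_comm: "G ** Ps = Ps ** G"
proof -
  have "G ** Ps = (Ps + Q) ** G ** Ps" by simp
  also have "\<dots> = Ps ** G ** Ps" using PGQ(2) by (simp only: mm_rdistrib) simp
  also have "\<dots> = Ps ** G ** (Ps + Q)" using PGQ(1) by (simp only: matrix_add_ldistrib) simp
  also have "\<dots> = Ps ** G" by simp
  finally show ?thesis .
qed

lemma dPhi_T: "Y \<in> T \<Longrightarrow> dPhi Y = J Y"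
proof -
  assume Y: "Y \<in> T"
  define a where "a = Ps ** Y ** Q"
  define b where "b = Q ** Y ** Ps"
  have QQ: "Q ** Q = Q" "Ps ** Q = 0" "Q ** Ps = 0" using proj_basic[OF P_idem] by auto
  have Yab: "Y = a + b" unfolding a_def b_def using tangent_facts(1)[OF P_idem Y] .
  have a1: "Ps ** a = a" unfolding a_def by (simp add: matrix_mul_assoc P_idem)
  have a2: "a ** Ps = 0" unfolding a_def by (metis QQ(3) matrix_mul_assoc times0_right)
  have b1: "Ps ** b = 0" unfolding b_def by (metis QQ(2) matrix_mul_assoc times0_left)
  have b2: "b ** Ps = b" unfolding b_def by (metis P_idem matrix_mul_assoc)
  have "Y ** G ** Q - Ps ** G ** Y + Q ** G ** Y - Y ** G ** Ps = Omega Ps G Y"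
    unfolding Omega_alt[OF P_sym G_sym tangent_sym[OF Y]]
    unfolding Yab by (rule comm_alg[OF P_idem GP_comm a1 a2 b1 b2])
  then show ?thesis unfolding dPhi_def J_alt[OF Y] PiP_def by (simp add: algebra_simps)
qed

end


context setting
begin

lemma dev_bound: "\<exists>c>0. \<forall>P'\<in>MN N. norm ((P' - Ps) - PiP Ps (P' - Ps)) \<le> c * (norm (P' - Ps))\<^sup>2"
proof -
  obtain K where K0: "K > 0" and K1: "\<forall>(A::real^'n^'n) (B::real^'n^'n). norm (A ** B) \<le> norm A * norm B * K"
    using bounded_bilinear.pos_bounded[OF bounded_bilinear_mm] by blast
  note K = K0 K1[rule_format]
  define c where "c = K * K * K * ((norm Ps)\<^sup>2 + (norm Q)\<^sup>2) + 1"
  have c: "c > 0" unfolding c_def using K by (simp add: add_nonneg_pos)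
  have tri: "norm (U ** (D ** D) ** U) \<le> K * K * K * (norm U)\<^sup>2 * (norm D)\<^sup>2" for U D :: "real^'n^'n"
  proof -
    have "norm (U ** (D ** D) ** U) \<le> norm (U ** (D ** D)) * norm U * K" using K(2)[of "U ** (D ** D)" U] by simp
    also have "\<dots> \<le> (norm U * norm (D ** D) * K) * norm U * K"
      using K by (intro mult_right_mono K(2)) auto
    also have "\<dots> \<le> (norm U * (norm D * norm D * K) * K) * norm U * K"
      using K by (intro mult_right_mono mult_left_mono K(2)) auto
    finally show ?thesis by (simp add: power2_eq_square algebra_simps)
  qed
  have "norm ((P' - Ps) - PiP Ps (P' - Ps)) \<le> c * (norm (P' - Ps))\<^sup>2" if P': "P' \<in> MN N" for P'
  proof -
    define D where "D = P' - Ps"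
    have "norm (D - PiP Ps D) = norm (Q ** (D ** D) ** Q - Ps ** (D ** D) ** Ps)"
      unfolding D_def using MN_dev[OF P_idem MN_idem[OF P']] by simp
    also have "\<dots> \<le> norm (Q ** (D ** D) ** Q) + norm (Ps ** (D ** D) ** Ps)" by (rule norm_triangle_ineq4)
    also have "\<dots> \<le> K * K * K * (norm Q)\<^sup>2 * (norm D)\<^sup>2 + K * K * K * (norm Ps)\<^sup>2 * (norm D)\<^sup>2"
      by (intro add_mono tri)
    also have "\<dots> \<le> c * (norm D)\<^sup>2" unfolding c_def by (simp add: algebra_simps)
    finally show ?thesis unfolding D_def .
  qed
  then show ?thesis using c by blast
qed

lemma lin_est:
  assumes b: "\<beta> > 0" and th: "\<theta> > 0"
  shows "\<exists>\<rho>>0. \<forall>P\<in>MN N. norm (P - Ps) < \<rho> \<longrightarrow>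
     R (P - \<beta> *\<^sub>R PiP P (gradH E P)) \<in> MN N \<and>
     norm (R (P - \<beta> *\<^sub>R PiP P (gradH E P)) - Ps - (PiP Ps (P - Ps) - \<beta> *\<^sub>R J (PiP Ps (P - Ps))))
       \<le> \<theta> * norm (P - Ps)"
proof -
  obtain c where c: "c > 0" and cb: "\<And>P'. P' \<in> MN N \<Longrightarrow> norm ((P' - Ps) - PiP Ps (P' - Ps)) \<le> c * (norm (P' - Ps))\<^sup>2"
    using dev_bound by blast
  obtain KP where KP: "KP > 0" "\<And>h. norm (dPhi h) \<le> norm h * KP"
    using bounded_linear.pos_bounded[OF dPhi_lin] by blast
  define e1 where "e1 = min 1 (\<theta> / (2 * \<beta>))"
  have e1: "e1 > 0" "e1 \<le> 1" "\<beta> * e1 \<le> \<theta> / 2" unfolding e1_def using b th by (auto simp: field_simps min_def)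
  obtain d where d: "d > 0" and dd: "\<And>y. norm (y - Ps) < d \<Longrightarrow> norm (Phi y - Phi Ps - dPhi (y - Ps)) \<le> e1 * norm (y - Ps)"
    using Phi_deriv e1(1) unfolding has_derivative_within_alt by blast
  define M1 where "M1 = CR * \<beta>\<^sup>2 * (KP + 1)\<^sup>2 + c + \<beta> * KP * c"
  have M1: "M1 \<ge> 0" unfolding M1_def using CR b KP c by simp
  define \<rho> where "\<rho> = min d (min (\<theta> / (2 * M1 + 1)) (\<delta>R / (\<beta> * (KP + 1) + 1)))"
  have rho: "\<rho> > 0" unfolding \<rho>_def using d th M1 dR b KP by (simp add: add_nonneg_pos)
  have main: "R (P - \<beta> *\<^sub>R PiP P (gradH E P)) \<in> MN N \<and>
     norm (R (P - \<beta> *\<^sub>R PiP P (gradH E P)) - Ps - (PiP Ps (P - Ps) - \<beta> *\<^sub>R J (PiP Ps (P - Ps))))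
       \<le> \<theta> * norm (P - Ps)" if P: "P \<in> MN N" and Pn: "norm (P - Ps) < \<rho>" for P
  proof -
    define D where "D = P - Ps"
    have Dd: "norm D < d" "norm D < \<theta> / (2 * M1 + 1)" "norm D < \<delta>R / (\<beta> * (KP + 1) + 1)"
      using Pn unfolding D_def \<rho>_def by auto
    have Ds: "transpose D = D" unfolding D_def using MN_sym[OF P] P_sym by (simp add: transpose_diff)
    have PiD: "PiP Ps D \<in> T" using PiP_tangent[OF P_sym P_idem Ds] .
    define X' where "X' = (- \<beta>) *\<^sub>R Phi P"
    have phi_err: "norm (Phi P - dPhi D) \<le> e1 * norm D"
      using dd[of P] Dd(1) Phi_Ps unfolding D_def by simp
    have phi_bnd: "norm (Phi P) \<le> (KP + 1) * norm D"
    proof -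
      have "norm (Phi P) \<le> norm (dPhi D) + norm (Phi P - dPhi D)" by (rule norm_triangle_sub)
      also have "\<dots> \<le> norm D * KP + e1 * norm D" using KP(2)[of D] phi_err by simp
      also have "\<dots> \<le> norm D * KP + 1 * norm D" using e1 mult_left_le_one_le[of "norm D" e1] by simp
      finally show ?thesis by (simp add: algebra_simps)
    qed
    have X'n: "norm X' \<le> \<beta> * ((KP + 1) * norm D)" unfolding X'_def using phi_bnd b by simp
    have X'small: "norm X' < \<delta>R"
    proof -
      have "\<beta> * ((KP + 1) * norm D) = (\<beta> * (KP + 1)) * norm D" by simp
      also have "\<dots> \<le> (\<beta> * (KP + 1) + 1) * norm D" by (intro mult_right_mono) auto
      also have "\<dots> < \<delta>R" using Dd(3) b KP by (simp add: field_simps add_nonneg_pos)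
      finally show ?thesis using X'n by simp
    qed
    have X'H: "X' \<in> Hsym" unfolding X'_def Phi_def Hsym_def
      using PiP_sym[OF MN_sym[OF P] gradH_sym] by (simp add: transpose_scalar transpose_uminus)
    have eqP: "P - \<beta> *\<^sub>R PiP P (gradH E P) = P + X'" unfolding X'_def Phi_def by simp
    have rr: "R (P + X') \<in> MN N \<and> norm (R (P + X') - (P + PiP P X')) \<le> CR * (norm X')\<^sup>2"
      using retr[OF P X'H X'small] .
    have PiX: "PiP P X' = X'" unfolding X'_def Phi_def
      by (simp add: bl_scaleR[OF PiP_linear] bl_neg[OF PiP_linear] PiP_idem[OF MN_idem[OF P]])
    define eR where "eR = R (P + X') - (P + X')"
    have eR: "norm eR \<le> CR * (norm X')\<^sup>2" using rr PiX unfolding eR_def by simp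
    have dT: "dPhi (PiP Ps D) = J (PiP Ps D)" using dPhi_T[OF PiD] .
    have decomp: "R (P + X') - Ps - (PiP Ps D - \<beta> *\<^sub>R J (PiP Ps D))
       = eR + (D - PiP Ps D) - \<beta> *\<^sub>R (Phi P - dPhi D) - \<beta> *\<^sub>R dPhi (D - PiP Ps D)"
      unfolding eR_def X'_def dT[symmetric] bl_diff[OF dPhi_lin]
      by (simp add: D_def algebra_simps)
    have "norm (R (P + X') - Ps - (PiP Ps D - \<beta> *\<^sub>R J (PiP Ps D)))
       \<le> norm eR + norm (D - PiP Ps D) + \<beta> * norm (Phi P - dPhi D) + \<beta> * norm (dPhi (D - PiP Ps D))"
      unfolding decomp using b
      by (smt (verit, best) norm_scaleR norm_triangle_ineq norm_triangle_ineq4 abs_of_pos)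
    also have "\<dots> \<le> CR * (\<beta> * ((KP + 1) * norm D))\<^sup>2 + c * (norm D)\<^sup>2 + \<beta> * (e1 * norm D)
        + \<beta> * ((c * (norm D)\<^sup>2) * KP)"
    proof (intro add_mono mult_left_mono)
      show "norm eR \<le> CR * (\<beta> * ((KP + 1) * norm D))\<^sup>2"
        using eR X'n CR by (meson mult_left_mono norm_ge_zero order_trans power_mono)
      show "norm (D - PiP Ps D) \<le> c * (norm D)\<^sup>2" using cb[OF P] unfolding D_def .
      show "norm (Phi P - dPhi D) \<le> e1 * norm D" by (rule phi_err)
      show "norm (dPhi (D - PiP Ps D)) \<le> c * (norm D)\<^sup>2 * KP"
        using KP(2)[of "D - PiP Ps D"] cb[OF P] KP(1) unfolding D_def
        by (meson mult_right_mono less_imp_le order_trans)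
    qed (use b in auto)
    also have "\<dots> = M1 * (norm D)\<^sup>2 + (\<beta> * e1) * norm D"
      unfolding M1_def by (simp add: power2_eq_square algebra_simps)
    also have "\<dots> \<le> (\<theta> / 2) * norm D + (\<theta> / 2) * norm D"
    proof (rule add_mono)
      have "M1 * norm D \<le> (2 * M1 + 1) * norm D" using M1 by (intro mult_right_mono) auto
      also have "\<dots> \<le> \<theta>" using Dd(2) M1 by (simp add: field_simps add_nonneg_pos less_imp_le)
      finally have "M1 * norm D \<le> \<theta>" .
      then have "M1 * norm D \<le> \<theta> / 2 + \<theta> / 2" by simp
      have "M1 * norm D * norm D \<le> (\<theta> / 2) * norm D"
      proof -
        have "2 * M1 * norm D \<le> (2 * M1 + 1) * norm D" by (intro mult_right_mono) auto
        also have "\<dots> \<le> \<theta>" using Dd(2) M1 by (simp add: field_simps add_nonneg_pos less_imp_le)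
        finally have "M1 * norm D \<le> \<theta> / 2" by simp
        then show ?thesis by (intro mult_right_mono) auto
      qed
      then show "M1 * (norm D)\<^sup>2 \<le> (\<theta> / 2) * norm D" by (simp add: power2_eq_square mult.assoc)
      show "(\<beta> * e1) * norm D \<le> (\<theta> / 2) * norm D" using e1 by (intro mult_right_mono) auto
    qed
    also have "\<dots> = \<theta> * norm D" by simp
    finally show ?thesis using rr unfolding D_def eqP by simp
  qed
  show ?thesis using rho main by blast
qed

end


context setting
begin

lemma main:
  "\<exists>\<beta>0>0. \<forall>\<beta>. 0 < \<beta> \<and> \<beta> < \<beta>0 \<longrightarrow>
           spec_radius (tangent Ps) (\<lambda>X. X - \<beta> *\<^sub>R Jgrad E Ps X) < 1 \<and>
           (\<exists>\<delta>>0. \<forall>\<theta>>0. \<exists>C>0. \<forall>P0\<in>MN N. norm (P0 - Ps) < \<delta> \<longrightarrow>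
              (\<forall>k. norm (((\<lambda>P. R (P - \<beta> *\<^sub>R PiP P (gradH E P))) ^^ k) P0 - Ps)
                   \<le> C * (spec_radius (tangent Ps) (\<lambda>X. X - \<beta> *\<^sub>R Jgrad E Ps X) + \<theta>) ^ k
                       * norm (P0 - Ps)))"
proof -
  obtain KJ where KJ: "KJ > 0" "\<And>x. norm (J x) \<le> norm x * KJ"
    using bounded_linear.pos_bounded[OF J_lin] by blast
  obtain cdev where cdev: "cdev > 0" and cb: "\<And>P'. P' \<in> MN N \<Longrightarrow> norm ((P' - Ps) - PiP Ps (P' - Ps)) \<le> cdev * (norm (P' - Ps))\<^sup>2"
    using dev_bound by blast
  have "spec_radius T (\<lambda>X. X - \<beta> *\<^sub>R J X) < 1 \<and>
           (\<exists>\<delta>>0. \<forall>\<theta>>0. \<exists>C>0. \<forall>P0\<in>MN N. norm (P0 - Ps) < \<delta> \<longrightarrow>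
              (\<forall>k. norm (((\<lambda>P. R (P - \<beta> *\<^sub>R PiP P (gradH E P))) ^^ k) P0 - Ps)
                   \<le> C * (spec_radius T (\<lambda>X. X - \<beta> *\<^sub>R J X) + \<theta>) ^ k * norm (P0 - Ps)))"
    if b: "0 < \<beta>" "\<beta> < 1 / KJ" for \<beta>
  proof -
    define Lb where "Lb = (\<lambda>X. X - \<beta> *\<^sub>R J X)"
    define r where "r = spec_radius T Lb"
    have bL: "bounded_linear Lb" unfolding Lb_def
      by (intro bounded_linear_sub bounded_linear_ident bounded_linear_compose[OF bounded_linear_scaleR_right J_lin])
    have maps: "Lb X \<in> T" if "X \<in> T" for X
      unfolding Lb_def using that J_maps subspace_tangent
      by (intro subspace_diff subspace_scale) auto
    have sym: "\<forall>x\<in>T. \<forall>y\<in>T. inner (Lb x) y = inner x (Lb y)"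
      unfolding Lb_def using J_sym by (simp add: inner_diff_left inner_diff_right)
    have bKJ: "\<beta> * KJ < 1" using b KJ by (simp add: field_simps)
    define c where "c = max 0 (1 - 2 * \<beta> * \<eta>)"
    have c1: "c < 1" unfolding c_def using b eta by simp
    have ev: "\<bar>a\<bar> \<le> c" if w: "w \<in> T" "w \<noteq> 0" "Lb w = a *\<^sub>R w" for w a
    proof -
      have Jw: "\<beta> *\<^sub>R J w = (1 - a) *\<^sub>R w" using w(3) unfolding Lb_def by (simp add: algebra_simps)
      have wn: "norm w > 0" using w by simp
      have "\<beta> * inner (J w) w = (1 - a) * (norm w)\<^sup>2"
        using arg_cong[OF Jw, of "\<lambda>v. inner v w"] by (simp add: dot_square_norm)
      moreover have "2 * \<eta> * (norm w)\<^sup>2 \<le> inner (J w) w" using J_pos[OF w(1)] .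
      ultimately have "\<beta> * (2 * \<eta> * (norm w)\<^sup>2) \<le> (1 - a) * (norm w)\<^sup>2"
        using b by (metis mult_left_mono less_imp_le)
      then have "(2 * \<beta> * \<eta>) * (norm w)\<^sup>2 \<le> (1 - a) * (norm w)\<^sup>2" by (simp add: algebra_simps)
      then have "2 * \<beta> * \<eta> \<le> 1 - a" using wn by (simp add: mult_le_cancel_right)
      then have up: "a \<le> 1 - 2 * \<beta> * \<eta>" by simp
      have "\<bar>1 - a\<bar> * norm w = \<beta> * norm (J w)" using arg_cong[OF Jw, of norm] b by simp
      also have "\<dots> \<le> \<beta> * (norm w * KJ)" using KJ(2) b by (intro mult_left_mono) auto
      finally have "\<bar>1 - a\<bar> \<le> \<beta> * KJ" using wn by (simp add: algebra_simps)
      then have "a > 0" using bKJ by linarith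
      then show ?thesis using up unfolding c_def by simp
    qed
    have rle: "r \<le> c" unfolding r_def
      by (rule spec_radius_le[OF sym]) (use ev in \<open>auto simp: c_def\<close>)
    have r1: "r < 1" using rle c1 by simp
    have r0: "r \<ge> 0" unfolding r_def by (rule spec_radius_nonneg[OF bL])
    have Lnorm: "norm (Lb y) \<le> r * norm y" if "y \<in> T" for y
      unfolding r_def by (rule norm_le_spec_radius[OF bL subspace_tangent maps sym that])
    have loc: "\<exists>\<rho>>0. \<forall>x\<in>MN N. norm (x - Ps) < \<rho> \<longrightarrow>
        R (x - \<beta> *\<^sub>R PiP x (gradH E x)) \<in> MN N \<and>
        norm (R (x - \<beta> *\<^sub>R PiP x (gradH E x)) - Ps) \<le> (r + \<theta>) * norm (x - Ps)" if th: "\<theta> > 0" for \<theta>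
    proof -
      obtain \<rho>1 where rho1: "\<rho>1 > 0" and le: "\<And>P. P \<in> MN N \<Longrightarrow> norm (P - Ps) < \<rho>1 \<Longrightarrow>
         R (P - \<beta> *\<^sub>R PiP P (gradH E P)) \<in> MN N \<and>
         norm (R (P - \<beta> *\<^sub>R PiP P (gradH E P)) - Ps - (PiP Ps (P - Ps) - \<beta> *\<^sub>R J (PiP Ps (P - Ps))))
           \<le> (\<theta> / 2) * norm (P - Ps)"
        using lin_est[OF b(1), of "\<theta> / 2"] th by auto
      define \<rho> where "\<rho> = min \<rho>1 (\<theta> / (2 * (r * cdev + 1)))"
      have rho: "\<rho> > 0" unfolding \<rho>_def using rho1 th r0 cdev by (simp add: add_nonneg_pos)
      have "R (x - \<beta> *\<^sub>R PiP x (gradH E x)) \<in> MN N \<and>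
        norm (R (x - \<beta> *\<^sub>R PiP x (gradH E x)) - Ps) \<le> (r + \<theta>) * norm (x - Ps)"
        if x: "x \<in> MN N" "norm (x - Ps) < \<rho>" for x
      proof -
        define D where "D = x - Ps"
        define y where "y = R (x - \<beta> *\<^sub>R PiP x (gradH E x))"
        have lx: "y \<in> MN N \<and> norm (y - Ps - Lb (PiP Ps D)) \<le> (\<theta> / 2) * norm D"
          using le[OF x(1)] x(2) unfolding \<rho>_def y_def D_def Lb_def by auto
        have Ds: "transpose D = D" unfolding D_def using MN_sym[OF x(1)] P_sym by (simp add: transpose_diff)
        have PiD: "PiP Ps D \<in> T" using PiP_tangent[OF P_sym P_idem Ds] .
        have "norm (PiP Ps D) \<le> norm D + norm (D - PiP Ps D)"
          using norm_triangle_sub[of "PiP Ps D" D] norm_minus_commute[of "PiP Ps D" D] by simp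
        also have "\<dots> \<le> norm D + cdev * (norm D)\<^sup>2" using cb[OF x(1)] unfolding D_def by simp
        finally have pn: "norm (PiP Ps D) \<le> norm D + cdev * (norm D)\<^sup>2" .
        have small: "r * cdev * (norm D)\<^sup>2 \<le> (\<theta> / 2) * norm D"
        proof -
          have "norm D \<le> \<theta> / (2 * (r * cdev + 1))" using x(2) unfolding \<rho>_def D_def by simp
          moreover have pos: "2 * (r * cdev + 1) > 0" using r0 cdev by (simp add: add_nonneg_pos)
          ultimately have "norm D * (2 * (r * cdev + 1)) \<le> \<theta>"
            by (simp add: pos_le_divide_eq)
          then have "(r * cdev + 1) * norm D \<le> \<theta> / 2" by (simp add: algebra_simps)
          moreover have "(r * cdev + 1) * norm D = r * cdev * norm D + norm D" by (simp add: algebra_simps)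
          ultimately have "r * cdev * norm D \<le> \<theta> / 2" using norm_ge_zero[of D] by linarith
          then have "r * cdev * norm D * norm D \<le> (\<theta> / 2) * norm D" by (intro mult_right_mono) auto
          then show ?thesis by (simp add: power2_eq_square mult.assoc)
        qed
        have "norm (y - Ps) \<le> norm (Lb (PiP Ps D)) + norm (y - Ps - Lb (PiP Ps D))"
          by (rule norm_triangle_sub)
        also have "\<dots> \<le> r * norm (PiP Ps D) + (\<theta> / 2) * norm D"
          using Lnorm[OF PiD] lx by simp
        also have "\<dots> \<le> r * (norm D + cdev * (norm D)\<^sup>2) + (\<theta> / 2) * norm D"
          using pn r0 th by (intro add_mono mult_left_mono) auto
        also have "\<dots> \<le> (r + \<theta>) * norm D" using small by (simp add: algebra_simps)
        finally show ?thesis using lx unfolding y_def D_def by simp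
      qed
      then show ?thesis using rho by blast
    qed
    from iter_conv[OF r0 r1 loc]
    have "\<exists>\<delta>>0. \<forall>\<theta>>0. \<exists>C>0. \<forall>x0\<in>MN N. norm (x0 - Ps) < \<delta> \<longrightarrow>
        (\<forall>k. norm (((\<lambda>P. R (P - \<beta> *\<^sub>R PiP P (gradH E P))) ^^ k) x0 - Ps) \<le> C * (r + \<theta>) ^ k * norm (x0 - Ps))"
      by blast
    then show ?thesis using r1 unfolding r_def Lb_def by blast
  qed
  moreover have "1 / KJ > 0" using KJ by simp
  ultimately show ?thesis by blast
qed

end

theorem theorem3p2:
  fixes E :: "real^'n^'n \<Rightarrow> real"
    and R :: "real^'n^'n \<Rightarrow> real^'n^'n"
    and Ps :: "real^'n^'n"
    and N :: nat
  assumes N: "1 \<le> N" "N \<le> CARD('n)"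
    and E_C2: "C2 E"
    and Ps_in: "Ps \<in> MN N"
    and nondeg: "\<exists>\<eta>>0. \<exists>\<epsilon>>0. \<forall>P\<in>MN N. norm (P - Ps) < \<epsilon> \<longrightarrow>
                    E P \<ge> E Ps + \<eta> * (norm (P - Ps))\<^sup>2"
    and R_C2: "C2 R"
    and R_H: "\<forall>X\<in>Hsym. R X \<in> Hsym"
    and R_retr: "\<exists>\<delta>>0. \<exists>C. \<forall>P\<in>MN N. \<forall>X\<in>Hsym. norm X < \<delta> \<longrightarrow>
                    R (P + X) \<in> MN N \<and>
                    norm (R (P + X) - (P + PiP P X)) \<le> C * (norm X)\<^sup>2"
  shows "\<exists>\<beta>0>0. \<forall>\<beta>. 0 < \<beta> \<and> \<beta> < \<beta>0 \<longrightarrow>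
           spec_radius (tangent Ps) (\<lambda>X. X - \<beta> *\<^sub>R Jgrad E Ps X) < 1 \<and>
           (\<exists>\<delta>>0. \<forall>\<theta>>0. \<exists>C>0. \<forall>P0\<in>MN N. norm (P0 - Ps) < \<delta> \<longrightarrow>
              (\<forall>k. norm (((\<lambda>P. R (P - \<beta> *\<^sub>R PiP P (gradH E P))) ^^ k) P0 - Ps)
                   \<le> C * (spec_radius (tangent Ps) (\<lambda>X. X - \<beta> *\<^sub>R Jgrad E Ps X) + \<theta>) ^ k
                       * norm (P0 - Ps)))"
proof -
  obtain f' f'' where d1: "\<And>x. (E has_derivative blinfun_apply (f' x)) (at x)"
    and d2: "\<And>x. (f' has_derivative blinfun_apply (f'' x)) (at x)"
    and c2: "continuous_on UNIV f''"
    using E_C2 unfolding C2_def by blast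
  obtain \<eta> \<epsilon> where eta: "\<eta> > 0" and eps: "\<epsilon> > 0"
    and nd: "\<And>P. P \<in> MN N \<Longrightarrow> norm (P - Ps) < \<epsilon> \<Longrightarrow> E P \<ge> E Ps + \<eta> * (norm (P - Ps))\<^sup>2"
    using nondeg by blast
  obtain \<delta>R C where dR: "\<delta>R > 0" and rt: "\<And>P X. P \<in> MN N \<Longrightarrow> X \<in> Hsym \<Longrightarrow> norm X < \<delta>R \<Longrightarrow>
      R (P + X) \<in> MN N \<and> norm (R (P + X) - (P + PiP P X)) \<le> C * (norm X)\<^sup>2"
    using R_retr by blast
  have rt': "R (P + X) \<in> MN N \<and> norm (R (P + X) - (P + PiP P X)) \<le> \<bar>C\<bar> * (norm X)\<^sup>2"
    if "P \<in> MN N" "X \<in> Hsym" "norm X < \<delta>R" for P X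
  proof -
    have "C * (norm X)\<^sup>2 \<le> \<bar>C\<bar> * (norm X)\<^sup>2" by (intro mult_right_mono) auto
    then show ?thesis using rt[OF that] by linarith
  qed
  interpret setting E R Ps N f' f'' \<eta> \<epsilon> \<delta>R "\<bar>C\<bar>"
    by unfold_locales (use d1 d2 c2 Ps_in eta eps nd dR rt' in auto)
  show ?thesis by (rule main)
qed

end
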